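(* Let $k \geq 100$ and $c > 1$ be fixed, let $G\sim G(n,\frac{c}{n})$, let $\widetilde{M}_k$ be a weighted ($k$th-)neighbourhood sum and let $\widehat{M}_k$ be its truncation. Then \[ \mathrm{Var}\left[\widetilde{M}_k - \widehat{M}_k\right] \leq n\exp\left(-c^2k^2\right) + O(1), \quad\text{as } n \rightarrow \infty. \]
   Context: $G(n,p)$ is the binomial random graph on $[n]$. $B_G(v,k)$ is the set of vertices at graph distance at most $k$ from $v$. A rooted graph $(H,r)$ is a graph with a distinguished vertex; $(H_1,r_1)\cong(H_2,r_2)$ means there is a graph isomorphism mapping $r_1$ to $r_2$. Let $\mathcal H$ be the set of (isomorphism classes of) rooted graphs $(H,r)$ of radius at most $k$ (all vertices within distance $k$ of $r$). A weighted neighbourhood sum is a random variable $\widetilde M_k=\sum_{v\in V(G)}\sum_{(H,r)\in\mathcal H}\beta_{(H,r)}\mathbf 1\{(G[B_G(v,k)],v)\cong(H,r)\}$, where $\beta_{(H,r)}\in[0,1]$ are constants depending only on $(H,r)$. Its truncation is $\widehat M_k=\sum_{v\in V(G)}\sum_{(T,r)\in\mathcal T}\beta_{(T,r)}\mathbf 1\{(G[B_G(v,k)],v)\cong(T,r)\}$, where $\mathcal T$ is the set of rooted trees $(T,r)\in\mathcal H$ with $1\le v(T)\le t_k\coloneqq(10ck)^{2k}$. *)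

theory Defs
  imports "HOL-Probability.Probability"
begin

definition graph :: "nat set \<Rightarrow> nat set set \<Rightarrow> bool" where
  "graph V E \<longleftrightarrow> finite V \<and> (\<forall>e\<in>E. e \<subseteq> V \<and> card e = 2)"

fun walk_le :: "nat set set \<Rightarrow> nat \<Rightarrow> nat \<Rightarrow> nat \<Rightarrow> bool" where
  "walk_le E 0 v u = (u = v)"
| "walk_le E (Suc m) v u = (walk_le E m v u \<or> (\<exists>w. walk_le E m v w \<and> {w, u} \<in> E))"

definition ball :: "nat set \<Rightarrow> nat set set \<Rightarrow> nat \<Rightarrow> nat \<Rightarrow> nat set" where
  "ball V E v k = {u \<in> V. walk_le E k v u}"

definition induced :: "nat set set \<Rightarrow> nat set \<Rightarrow> nat set set" where
  "induced E B = {e \<in> E. e \<subseteq> B}"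

definition rooted_iso ::
  "nat set \<Rightarrow> nat set set \<Rightarrow> nat \<Rightarrow> nat set \<Rightarrow> nat set set \<Rightarrow> nat \<Rightarrow> bool" where
  "rooted_iso V1 E1 r1 V2 E2 r2 \<longleftrightarrow>
     (\<exists>f. bij_betw f V1 V2 \<and> f r1 = r2 \<and>
          (\<forall>x\<in>V1. \<forall>y\<in>V1. {x, y} \<in> E1 \<longleftrightarrow> {f x, f y} \<in> E2))"

definition connected_graph :: "nat set \<Rightarrow> nat set set \<Rightarrow> bool" where
  "connected_graph V E \<longleftrightarrow> (\<forall>u\<in>V. \<forall>w\<in>V. \<exists>m. walk_le E m u w)"

definition has_cycle :: "nat set \<Rightarrow> nat set set \<Rightarrow> bool" where
  "has_cycle V E \<longleftrightarrow> (\<exists>xs. length xs \<ge> 3 \<and> distinct xs \<and> set xs \<subseteq> V \<and>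
      (\<forall>i. Suc i < length xs \<longrightarrow> {xs ! i, xs ! Suc i} \<in> E) \<and> {last xs, hd xs} \<in> E)"

definition is_tree :: "nat set \<Rightarrow> nat set set \<Rightarrow> bool" where
  "is_tree V E \<longleftrightarrow> V \<noteq> {} \<and> connected_graph V E \<and> \<not> has_cycle V E"

definition weight_fun :: "(nat set \<Rightarrow> nat set set \<Rightarrow> nat \<Rightarrow> real) \<Rightarrow> bool" where
  "weight_fun \<beta> \<longleftrightarrow>
     (\<forall>V E r. 0 \<le> \<beta> V E r \<and> \<beta> V E r \<le> 1) \<and>
     (\<forall>V1 E1 r1 V2 E2 r2. graph V1 E1 \<and> graph V2 E2 \<and> r1 \<in> V1 \<and> r2 \<in> V2 \<and>
          rooted_iso V1 E1 r1 V2 E2 r2 \<longrightarrow> \<beta> V1 E1 r1 = \<beta> V2 E2 r2)"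

definition all_pairs :: "nat \<Rightarrow> nat set set" where
  "all_pairs n = {{i, j} | i j. i < j \<and> j < n}"

definition gnp :: "nat \<Rightarrow> real \<Rightarrow> nat set set pmf" where
  "gnp n p = map_pmf (\<lambda>f. {e \<in> all_pairs n. f e})
                     (Pi_pmf (all_pairs n) False (\<lambda>_. bernoulli_pmf p))"

definition Mtilde :: "nat \<Rightarrow> (nat set \<Rightarrow> nat set set \<Rightarrow> nat \<Rightarrow> real) \<Rightarrow> nat \<Rightarrow> nat set set \<Rightarrow> real" where
  "Mtilde k \<beta> n E = (\<Sum>v<n. let B = ball {..<n} E v k in \<beta> B (induced E B) v)"

definition t_k :: "real \<Rightarrow> nat \<Rightarrow> real" where
  "t_k c k = (10 * c * real k) ^ (2 * k)"

definition Mhat :: "nat \<Rightarrow> real \<Rightarrow> (nat set \<Rightarrow> nat set set \<Rightarrow> nat \<Rightarrow> real) \<Rightarrow> nat \<Rightarrow> nat set set \<Rightarrow> real" where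
  "Mhat k c \<beta> n E = (\<Sum>v<n. let B = ball {..<n} E v k in
      if is_tree B (induced E B) \<and> 1 \<le> card B \<and> real (card B) \<le> t_k c k
      then \<beta> B (induced E B) v else 0)"

end

theory Submission
  imports Defs
begin


definition wt :: "'a set \<Rightarrow> real \<Rightarrow> 'a set \<Rightarrow> real" where
  "wt A p S = p ^ card S * (1-p) ^ card (A - S)"

definition EA :: "'a set \<Rightarrow> real \<Rightarrow> ('a set \<Rightarrow> real) \<Rightarrow> real" where
  "EA A p g = (\<Sum>S\<in>Pow A. wt A p S * g S)"

lemma EA_insert:
  assumes "finite A" "x \<notin> A"
  shows "EA (insert x A) p g = (1-p) * EA A p g + p * EA A p (\<lambda>S. g (insert x S))"
proof -
  have fin: "finite (Pow A)" using assms by simp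
  have disj: "Pow A \<inter> insert x ` Pow A = {}" using assms by auto
  have inj: "inj_on (insert x) (Pow A)" using assms unfolding inj_on_def by (metis Pow_iff insert_ident subsetD)
  have w1: "wt (insert x A) p S = (1-p) * wt A p S" if "S \<subseteq> A" for S
  proof -
    have "insert x A - S = insert x (A - S)" using that assms by auto
    moreover have "finite (A - S)" using assms by auto
    ultimately show ?thesis using assms unfolding wt_def by simp
  qed
  have w2: "wt (insert x A) p (insert x S) = p * wt A p S" if "S \<subseteq> A" for S
  proof -
    have "insert x A - insert x S = A - S" using that assms by auto
    moreover have "finite S" "x \<notin> S" using assms that finite_subset by auto
    ultimately show ?thesis unfolding wt_def by simp
  qed
  have "EA (insert x A) p g = (\<Sum>S\<in>Pow A. wt (insert x A) p S * g S) + (\<Sum>S\<in>insert x ` Pow A. wt (insert x A) p S * g S)"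
    unfolding EA_def Pow_insert using fin disj by (simp add: sum.union_disjoint)
  also have "(\<Sum>S\<in>insert x ` Pow A. wt (insert x A) p S * g S) = (\<Sum>S\<in>Pow A. wt (insert x A) p (insert x S) * g (insert x S))"
    using inj by (simp add: sum.reindex)
  also have "\<dots> = p * EA A p (\<lambda>S. g (insert x S))"
    unfolding EA_def sum_distrib_left by (rule sum.cong) (auto simp: w2)
  also have "(\<Sum>S\<in>Pow A. wt (insert x A) p S * g S) = (1-p) * EA A p g"
    unfolding EA_def sum_distrib_left by (rule sum.cong) (auto simp: w1)
  finally show ?thesis by simp
qed

lemma EA_empty[simp]: "EA {} p g = g {}"
  unfolding EA_def wt_def by simp

lemma EA_const: "finite A \<Longrightarrow> EA A p (\<lambda>_. c) = c"
  by (induction A rule: finite_induct) (auto simp: EA_insert algebra_simps)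

lemma EA_add: "EA A p (\<lambda>S. f S + g S) = EA A p f + EA A p g"
  unfolding EA_def by (simp add: algebra_simps sum.distrib)

lemma EA_diff: "EA A p (\<lambda>S. f S - g S) = EA A p f - EA A p g"
  unfolding EA_def by (simp add: algebra_simps sum_subtractf)

lemma EA_cmult: "EA A p (\<lambda>S. c * f S) = c * EA A p f"
  unfolding EA_def by (simp add: algebra_simps sum_distrib_left)

lemma EA_sum: "finite I \<Longrightarrow> EA A p (\<lambda>S. \<Sum>i\<in>I. f i S) = (\<Sum>i\<in>I. EA A p (f i))"
  by (induction I rule: finite_induct) (auto simp: EA_add EA_def)

lemma wt_nonneg: "0 \<le> p \<Longrightarrow> p \<le> 1 \<Longrightarrow> 0 \<le> wt A p S"
  unfolding wt_def by simp

lemma EA_mono: "0 \<le> p \<Longrightarrow> p \<le> 1 \<Longrightarrow> (\<And>S. S \<subseteq> A \<Longrightarrow> f S \<le> g S) \<Longrightarrow> EA A p f \<le> EA A p g"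
  unfolding EA_def by (intro sum_mono mult_left_mono) (auto simp: wt_nonneg)

lemma EA_nonneg: "0 \<le> p \<Longrightarrow> p \<le> 1 \<Longrightarrow> (\<And>S. S \<subseteq> A \<Longrightarrow> 0 \<le> f S) \<Longrightarrow> 0 \<le> EA A p f"
  using EA_mono[of p A "\<lambda>_. 0" f] unfolding EA_def by simp

lemma efron_stein:
  assumes "finite A" "0 \<le> p" "p \<le> 1"
  shows "EA A p (\<lambda>S. (f S)\<^sup>2) - (EA A p f)\<^sup>2
     \<le> p * (1-p) * (\<Sum>i\<in>A. EA A p (\<lambda>S. (f (insert i S) - f (S - {i}))\<^sup>2))"
  using assms(1)
proof (induction A arbitrary: f rule: finite_induct)
  case empty
  then show ?case by (simp add: EA_def wt_def)
next
  case (insert x A)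
  define f1 where "f1 = (\<lambda>S. f (insert x S))"
  have IH0: "EA A p (\<lambda>S. (f S)\<^sup>2) - (EA A p f)\<^sup>2
     \<le> p * (1-p) * (\<Sum>i\<in>A. EA A p (\<lambda>S. (f (insert i S) - f (S - {i}))\<^sup>2))" by (rule insert.IH)
  have IH1: "EA A p (\<lambda>S. (f1 S)\<^sup>2) - (EA A p f1)\<^sup>2
     \<le> p * (1-p) * (\<Sum>i\<in>A. EA A p (\<lambda>S. (f1 (insert i S) - f1 (S - {i}))\<^sup>2))" by (rule insert.IH)
  have jensen: "(EA A p f - EA A p f1)\<^sup>2 \<le> EA A p (\<lambda>S. (f S - f1 S)\<^sup>2)"
  proof -
    define m where "m = EA A p f - EA A p f1"
    have "0 \<le> EA A p (\<lambda>S. (f S - f1 S - m)\<^sup>2)" by (rule EA_nonneg) (use assms in auto)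
    also have "EA A p (\<lambda>S. (f S - f1 S - m)\<^sup>2) = EA A p (\<lambda>S. (f S - f1 S)\<^sup>2) - 2 * m * (EA A p f - EA A p f1) + m\<^sup>2"
    proof -
      have e1: "(\<lambda>S. (f S - f1 S - m)\<^sup>2) = (\<lambda>S. ((f S - f1 S)\<^sup>2 + (- 2 * m) * f S + (2*m) * f1 S) + m\<^sup>2)"
        by (auto simp: power2_eq_square algebra_simps)
      have "EA A p (\<lambda>S. ((f S - f1 S)\<^sup>2 + (- 2 * m) * f S + (2*m) * f1 S) + m\<^sup>2)
         = EA A p (\<lambda>S. (f S - f1 S)\<^sup>2) + (- 2 * m) * EA A p f + (2*m) * EA A p f1 + m\<^sup>2"
        by (simp only: EA_add EA_cmult EA_const[OF insert.hyps(1)])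
      then show ?thesis unfolding e1 by (simp add: algebra_simps)
    qed
    finally show ?thesis unfolding m_def by (simp add: power2_eq_square algebra_simps)
  qed
  have step: "EA (insert x A) p (\<lambda>S. (f S)\<^sup>2) - (EA (insert x A) p f)\<^sup>2
      = (1-p) * (EA A p (\<lambda>S. (f S)\<^sup>2) - (EA A p f)\<^sup>2) + p * (EA A p (\<lambda>S. (f1 S)\<^sup>2) - (EA A p f1)\<^sup>2)
        + p * (1-p) * (EA A p f - EA A p f1)\<^sup>2"
    unfolding EA_insert[OF insert.hyps] f1_def by (simp add: power2_eq_square algebra_simps)
  have termx: "EA (insert x A) p (\<lambda>S. (f (insert x S) - f (S - {x}))\<^sup>2) = EA A p (\<lambda>S. (f S - f1 S)\<^sup>2)"
  proof -
    have a: "EA A p (\<lambda>S. (f (insert x S) - f (S - {x}))\<^sup>2) = EA A p (\<lambda>S. (f S - f1 S)\<^sup>2)"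
      unfolding EA_def f1_def
    proof (rule sum.cong)
      fix S assume "S \<in> Pow A" then have "S - {x} = S" using insert.hyps by auto
      then show "wt A p S * (f (insert x S) - f (S - {x}))\<^sup>2 = wt A p S * (f S - f (insert x S))\<^sup>2"
        by (simp add: power2_commute)
    qed simp
    have b: "EA A p (\<lambda>S. (f (insert x (insert x S)) - f (insert x S - {x}))\<^sup>2) = EA A p (\<lambda>S. (f S - f1 S)\<^sup>2)"
      unfolding EA_def f1_def
    proof (rule sum.cong)
      fix S assume "S \<in> Pow A" then have "insert x S - {x} = S" using insert.hyps by auto
      then show "wt A p S * (f (insert x (insert x S)) - f (insert x S - {x}))\<^sup>2 = wt A p S * (f S - f (insert x S))\<^sup>2"
        by (simp add: power2_commute)
    qed simp
    show ?thesis unfolding EA_insert[OF insert.hyps] a b by (simp add: algebra_simps)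
  qed
  have termi: "EA (insert x A) p (\<lambda>S. (f (insert i S) - f (S - {i}))\<^sup>2)
     = (1-p) * EA A p (\<lambda>S. (f (insert i S) - f (S - {i}))\<^sup>2) + p * EA A p (\<lambda>S. (f1 (insert i S) - f1 (S - {i}))\<^sup>2)"
    if "i \<in> A" for i
  proof -
    have "i \<noteq> x" using that insert.hyps by auto
    then have "\<And>S. insert x S - {i} = insert x (S - {i})" "\<And>S. insert i (insert x S) = insert x (insert i S)" by auto
    then show ?thesis unfolding EA_insert[OF insert.hyps] f1_def by simp
  qed
  have "EA (insert x A) p (\<lambda>S. (f S)\<^sup>2) - (EA (insert x A) p f)\<^sup>2
     \<le> (1-p) * (p * (1-p) * (\<Sum>i\<in>A. EA A p (\<lambda>S. (f (insert i S) - f (S - {i}))\<^sup>2)))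
       + p * (p * (1-p) * (\<Sum>i\<in>A. EA A p (\<lambda>S. (f1 (insert i S) - f1 (S - {i}))\<^sup>2)))
       + p * (1-p) * EA A p (\<lambda>S. (f S - f1 S)\<^sup>2)"
    unfolding step
    apply (intro add_mono mult_left_mono IH0 IH1 jensen)
    using assms by auto
  also have "\<dots> = p * (1-p) * (EA A p (\<lambda>S. (f S - f1 S)\<^sup>2) + ((1-p) * (\<Sum>i\<in>A. EA A p (\<lambda>S. (f (insert i S) - f (S - {i}))\<^sup>2))
      + p * (\<Sum>i\<in>A. EA A p (\<lambda>S. (f1 (insert i S) - f1 (S - {i}))\<^sup>2))))"
    by (simp add: algebra_simps)
  also have "(1-p) * (\<Sum>i\<in>A. EA A p (\<lambda>S. (f (insert i S) - f (S - {i}))\<^sup>2))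
      + p * (\<Sum>i\<in>A. EA A p (\<lambda>S. (f1 (insert i S) - f1 (S - {i}))\<^sup>2))
      = (\<Sum>i\<in>A. (1-p) * EA A p (\<lambda>S. (f (insert i S) - f (S - {i}))\<^sup>2) + p * EA A p (\<lambda>S. (f1 (insert i S) - f1 (S - {i}))\<^sup>2))"
    by (simp add: sum.distrib sum_distrib_left)
  also have "\<dots> = (\<Sum>i\<in>A. EA (insert x A) p (\<lambda>S. (f (insert i S) - f (S - {i}))\<^sup>2))"
    by (rule sum.cong) (simp_all add: termi)
  also have "EA A p (\<lambda>S. (f S - f1 S)\<^sup>2) + (\<Sum>i\<in>A. EA (insert x A) p (\<lambda>S. (f (insert i S) - f (S - {i}))\<^sup>2))
     = (\<Sum>i\<in>insert x A. EA (insert x A) p (\<lambda>S. (f (insert i S) - f (S - {i}))\<^sup>2))"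
    using insert.hyps by (simp add: termx)
  finally show ?case .
qed


lemma expect_gp:
  assumes "finite A" "0 \<le> p" "p \<le> 1"
  shows "measure_pmf.expectation (map_pmf (\<lambda>f. {e \<in> A. f e}) (Pi_pmf A False (\<lambda>_. bernoulli_pmf p))) g = EA A p g"
proof -
  let ?M = "Pi_pmf A False (\<lambda>_. bernoulli_pmf p)"
  let ?F = "\<lambda>f. {e \<in> A. f e}"
  let ?Fs = "(\<lambda>S e. e \<in> S) ` Pow A"
  have "measure_pmf.expectation (map_pmf ?F ?M) g = measure_pmf.expectation ?M (\<lambda>f. g (?F f))"
    by simp
  also have "\<dots> = (\<Sum>h\<in>?Fs. g (?F h) * pmf ?M h)"
  proof (rule integral_measure_pmf_real)
    show "finite ?Fs" using assms by simp
    fix h assume "h \<in> set_pmf ?M"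
    then have "\<forall>x. x \<notin> A \<longrightarrow> h x = False" using set_Pi_pmf_subset[OF assms(1), of False "\<lambda>_. bernoulli_pmf p"] by blast
    then have "h = (\<lambda>e. e \<in> ?F h)" by auto
    then show "h \<in> ?Fs" by blast
  qed
  also have "\<dots> = (\<Sum>S\<in>Pow A. g (?F (\<lambda>e. e \<in> S)) * pmf ?M (\<lambda>e. e \<in> S))"
  proof (rule sum.reindex_cong[where l="\<lambda>S e. e \<in> S"])
    show "inj_on (\<lambda>S e. e \<in> S) (Pow A)" unfolding inj_on_def by (metis Collect_mem_eq)
  qed auto
  also have "\<dots> = EA A p g"
    unfolding EA_def
  proof (rule sum.cong)
    fix S assume S: "S \<in> Pow A"
    then have "?F (\<lambda>e. e \<in> S) = S" by auto
    moreover have "pmf ?M (\<lambda>e. e \<in> S) = wt A p S"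
    proof -
      have "pmf ?M (\<lambda>e. e \<in> S) = (\<Prod>x\<in>A. pmf (bernoulli_pmf p) (x \<in> S))"
        using S by (subst pmf_Pi') (use assms in auto)
      also have "\<dots> = (\<Prod>x\<in>A. if x \<in> S then p else 1 - p)"
        using assms by (intro prod.cong) auto
      also have "\<dots> = (\<Prod>x\<in>A \<inter> {x. x \<in> S}. p) * (\<Prod>x\<in>A \<inter> - {x. x \<in> S}. 1 - p)"
        by (rule prod.If_cases) (use assms in auto)
      also have "\<dots> = wt A p S" unfolding wt_def using S
        by (simp add: Int_absorb1 Diff_eq)
      finally show ?thesis .
    qed
    ultimately show "g (?F (\<lambda>e. e \<in> S)) * pmf ?M (\<lambda>e. e \<in> S) = wt A p S * g S" by simp
  qed simp
  finally show ?thesis .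
qed

lemma finite_all_pairs: "finite (all_pairs n)"
proof -
  have "all_pairs n \<subseteq> Pow {..<n}" unfolding all_pairs_def by auto
  then show ?thesis by (rule finite_subset) simp
qed

lemma var_gnp:
  assumes "0 \<le> p" "p \<le> 1"
  shows "measure_pmf.variance (gnp n p) f
     \<le> p * (1-p) * (\<Sum>i\<in>all_pairs n. EA (all_pairs n) p (\<lambda>S. (f (insert i S) - f (S - {i}))\<^sup>2))"
proof -
  let ?A = "all_pairs n"
  have E: "\<And>g. measure_pmf.expectation (gnp n p) g = EA ?A p g"
    unfolding gnp_def by (rule expect_gp) (use assms finite_all_pairs in auto)
  have "measure_pmf.variance (gnp n p) f = EA ?A p (\<lambda>S. (f S - EA ?A p f)\<^sup>2)"
    by (simp add: E)
  also have "\<dots> = EA ?A p (\<lambda>S. (f S)\<^sup>2) - (EA ?A p f)\<^sup>2"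
  proof -
    have e1: "(\<lambda>S. (f S - EA ?A p f)\<^sup>2) = (\<lambda>S. ((f S)\<^sup>2 + (- 2 * EA ?A p f) * f S) + (EA ?A p f)\<^sup>2)"
      by (auto simp: power2_eq_square algebra_simps)
    show ?thesis unfolding e1
      by (simp only: EA_add EA_cmult EA_const[OF finite_all_pairs]) (simp add: power2_eq_square algebra_simps)
  qed
  also have "\<dots> \<le> p * (1-p) * (\<Sum>i\<in>all_pairs n. EA (all_pairs n) p (\<lambda>S. (f (insert i S) - f (S - {i}))\<^sup>2))" by (rule efron_stein) (use assms finite_all_pairs in auto)
  finally show ?thesis .
qed


lemma EA_cong: "(\<And>S. S \<subseteq> A \<Longrightarrow> f S = g S) \<Longrightarrow> EA A p f = EA A p g"
  unfolding EA_def by (rule sum.cong) auto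

lemma EA_subset_ind:
  assumes "finite A" "F \<subseteq> A"
  shows "EA A p (\<lambda>S. of_bool (F \<subseteq> S)) = p ^ card F"
  using assms
proof (induction A arbitrary: F rule: finite_induct)
  case empty
  then show ?case by simp
next
  case (insert x A)
  show ?case
  proof (cases "x \<in> F")
    case True
    have z: "EA A p (\<lambda>S. of_bool (F \<subseteq> S)) = EA A p (\<lambda>S. 0)"
      by (rule EA_cong) (use True insert.hyps in auto)
    have o: "EA A p (\<lambda>S. of_bool (F \<subseteq> insert x S)) = EA A p (\<lambda>S. of_bool (F - {x} \<subseteq> S))"
      by (rule EA_cong) (use True insert.hyps in auto)
    have "F - {x} \<subseteq> A" using insert.prems by auto
    then have "EA A p (\<lambda>S. of_bool (F - {x} \<subseteq> S)) = p ^ card (F - {x})" by (rule insert.IH)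
    moreover have "finite F" using insert.prems insert.hyps finite_subset by blast
    ultimately show ?thesis
      unfolding EA_insert[OF insert.hyps] z o EA_const[OF insert.hyps(1)] using True
      by (simp del: card_Diff_insert add: card_Suc_Diff1[OF \<open>finite F\<close> True, symmetric])
  next
    case False
    have o: "EA A p (\<lambda>S. of_bool (F \<subseteq> insert x S)) = EA A p (\<lambda>S. of_bool (F \<subseteq> S))"
      by (rule EA_cong) (use False in auto)
    have "F \<subseteq> A" using insert.prems False by auto
    then have "EA A p (\<lambda>S. of_bool (F \<subseteq> S)) = p ^ card F" by (rule insert.IH)
    then show ?thesis unfolding EA_insert[OF insert.hyps] o by (simp add: algebra_simps)
  qed
qed

lemma EA_subset_ind_le:
  assumes "finite A" "0 \<le> p" "p \<le> 1"
  shows "EA A p (\<lambda>S. of_bool (F \<subseteq> S)) \<le> p ^ card F"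
proof (cases "F \<subseteq> A")
  case True
  then show ?thesis using EA_subset_ind[OF assms(1) True] by simp
next
  case False
  have "EA A p (\<lambda>S. of_bool (F \<subseteq> S)) = EA A p (\<lambda>S. 0)"
    by (rule EA_cong) (use False in auto)
  then show ?thesis using assms by (simp add: EA_const)
qed

lemma union_bound:
  assumes "finite A" "0 \<le> p" "p \<le> 1" "finite I"
    and "\<And>S. S \<subseteq> A \<Longrightarrow> P S \<Longrightarrow> \<exists>i\<in>I. F i \<subseteq> S"
  shows "EA A p (\<lambda>S. of_bool (P S)) \<le> (\<Sum>i\<in>I. p ^ card (F i))"
proof -
  have "EA A p (\<lambda>S. of_bool (P S)) \<le> EA A p (\<lambda>S. \<Sum>i\<in>I. of_bool (F i \<subseteq> S))"
  proof (rule EA_mono[OF assms(2,3)])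
    fix S assume S: "S \<subseteq> A"
    show "of_bool (P S) \<le> (\<Sum>i\<in>I. of_bool (F i \<subseteq> S) :: real)"
    proof (cases "P S")
      case True
      then obtain i where i: "i \<in> I" "F i \<subseteq> S" using assms(5) S by blast
      have "(1::real) = of_bool (F i \<subseteq> S)" using i by simp
      also have "\<dots> \<le> (\<Sum>i\<in>I. of_bool (F i \<subseteq> S))"
        by (rule member_le_sum) (use i assms(4) in auto)
      finally show ?thesis using True by simp
    qed (simp add: sum_nonneg)
  qed
  also have "\<dots> = (\<Sum>i\<in>I. EA A p (\<lambda>S. of_bool (F i \<subseteq> S)))" by (rule EA_sum[OF assms(4)])
  also have "\<dots> \<le> (\<Sum>i\<in>I. p ^ card (F i))"
    by (rule sum_mono) (rule EA_subset_ind_le[OF assms(1-3)])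
  finally show ?thesis .
qed


lemma all_pairs_mem: "{x, y} \<in> all_pairs n \<Longrightarrow> x < n \<and> y < n \<and> x \<noteq> y"
  unfolding all_pairs_def by (auto simp: doubleton_eq_iff)

lemma all_pairs_iff: "e \<in> all_pairs n \<longleftrightarrow> (\<exists>i j. e = {i, j} \<and> i < j \<and> j < n)"
  unfolding all_pairs_def by auto

lemma walk_le_mono: "walk_le E r v u \<Longrightarrow> r \<le> r' \<Longrightarrow> walk_le E r' v u"
proof (induction r' arbitrary: r)
  case 0 then show ?case by simp
next
  case (Suc r')
  then show ?case by (cases "r = Suc r'") auto
qed

lemma walk_le_mono_E: "walk_le E r v u \<Longrightarrow> E \<subseteq> E' \<Longrightarrow> walk_le E' r v u"
  by (induction r arbitrary: u) auto

lemma walk_le_trans: "walk_le E r1 x y \<Longrightarrow> walk_le E r2 y z \<Longrightarrow> walk_le E (r1 + r2) x z"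
proof (induction r2 arbitrary: z)
  case 0 then show ?case by simp
next
  case (Suc r2)
  from Suc.prems(2) have "walk_le E r2 y z \<or> (\<exists>w. walk_le E r2 y w \<and> {w, z} \<in> E)" by simp
  then show ?case
  proof (elim disjE)
    assume "walk_le E r2 y z" then show ?thesis using Suc by simp
  next
    assume "\<exists>w. walk_le E r2 y w \<and> {w, z} \<in> E"
    then obtain w where "walk_le E r2 y w" "{w, z} \<in> E" by blast
    then show ?thesis using Suc.IH[of w] Suc.prems(1) by auto
  qed
qed

lemma walk_le_edge: "{x, y} \<in> E \<Longrightarrow> walk_le E 1 x y"
  by simp

lemma walk_le_sym: "walk_le E r x y \<Longrightarrow> walk_le E r y x"
proof (induction r arbitrary: y)
  case 0 then show ?case by simp
next
  case (Suc r)
  from Suc.prems[simplified] show ?case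
  proof (elim disjE)
    assume "walk_le E r x y" then show ?thesis using Suc.IH by simp
  next
    assume "\<exists>w. walk_le E r x w \<and> {w, y} \<in> E"
    then obtain w where w: "walk_le E r x w" "{w, y} \<in> E" by blast
    have "{y, w} \<in> E" using w(2) by (simp add: insert_commute)
    then have "walk_le E 1 y w" by simp
    from walk_le_trans[OF this Suc.IH[OF w(1)]] show ?thesis by simp
  qed
qed

fun adjl :: "nat set set \<Rightarrow> nat list \<Rightarrow> bool" where
  "adjl E (x # y # zs) = ({x, y} \<in> E \<and> adjl E (y # zs))"
| "adjl E _ = True"

lemma adjl_Cons: "adjl E (x # xs) \<longleftrightarrow> adjl E xs \<and> (xs \<noteq> [] \<longrightarrow> {x, hd xs} \<in> E)"
  by (cases xs) auto

lemma adjl_append: "adjl E (xs @ ys) \<longleftrightarrow> adjl E xs \<and> adjl E ys \<and> (xs \<noteq> [] \<and> ys \<noteq> [] \<longrightarrow> {last xs, hd ys} \<in> E)"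
  by (induction xs) (auto simp: adjl_Cons)

lemma adjl_nth: "adjl E xs \<longleftrightarrow> (\<forall>i. Suc i < length xs \<longrightarrow> {xs ! i, xs ! Suc i} \<in> E)"
proof (induction xs)
  case Nil then show ?case by simp
next
  case (Cons x xs)
  show ?case
  proof
    assume a: "adjl E (x # xs)"
    show "\<forall>i. Suc i < length (x # xs) \<longrightarrow> {(x # xs) ! i, (x # xs) ! Suc i} \<in> E"
    proof (intro allI impI)
      fix i assume i: "Suc i < length (x # xs)"
      show "{(x # xs) ! i, (x # xs) ! Suc i} \<in> E"
      proof (cases i)
        case 0 then show ?thesis using a i by (cases xs) auto
      next
        case (Suc i')
        then show ?thesis using a i Cons.IH by (simp add: adjl_Cons)
      qed
    qed
  next
    assume b: "\<forall>i. Suc i < length (x # xs) \<longrightarrow> {(x # xs) ! i, (x # xs) ! Suc i} \<in> E"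
    have "adjl E xs" using Cons.IH b by fastforce
    moreover have "xs \<noteq> [] \<longrightarrow> {x, hd xs} \<in> E" using b[rule_format, of 0] by (cases xs) auto
    ultimately show "adjl E (x # xs)" by (simp add: adjl_Cons)
  qed
qed

lemma adjl_mono: "adjl E xs \<Longrightarrow> E \<subseteq> E' \<Longrightarrow> adjl E' xs"
  by (induction E xs rule: adjl.induct) auto

lemma adjl_walk: "adjl E xs \<Longrightarrow> xs \<noteq> [] \<Longrightarrow> walk_le E (length xs - 1) (hd xs) (last xs)"
proof (induction xs)
  case Nil then show ?case by simp
next
  case (Cons x xs)
  show ?case
  proof (cases xs)
    case Nil then show ?thesis by simp
  next
    case (Cons y ys)
    have e: "{x, hd xs} \<in> E" using Cons.prems Cons by simp
    have w: "walk_le E (length xs - 1) (hd xs) (last xs)" using Cons.IH Cons.prems Cons by (simp add: adjl_Cons)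
    have "walk_le E (1 + (length xs - 1)) x (last xs)"
      by (rule walk_le_trans[OF walk_le_edge[OF e] w])
    then show ?thesis using Cons by simp
  qed
qed

lemma walk_path:
  assumes "walk_le E r x u"
  shows "\<exists>xs. xs \<noteq> [] \<and> hd xs = x \<and> last xs = u \<and> length xs \<le> Suc r \<and> distinct xs \<and> adjl E xs"
  using assms
proof (induction r arbitrary: u)
  case 0 then show ?case by (intro exI[of _ "[x]"]) simp
next
  case (Suc r)
  from Suc.prems[simplified] show ?case
  proof (elim disjE)
    assume "walk_le E r x u"
    then show ?thesis using Suc.IH by (meson le_Suc_eq)
  next
    assume "\<exists>w. walk_le E r x w \<and> {w, u} \<in> E"
    then obtain w where w: "walk_le E r x w" "{w, u} \<in> E" by blast
    obtain ys where ys: "ys \<noteq> []" "hd ys = x" "last ys = w" "length ys \<le> Suc r" "distinct ys" "adjl E ys"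
      using Suc.IH[OF w(1)] by blast
    show ?thesis
    proof (cases "u \<in> set ys")
      case True
      then obtain as bs where ab: "ys = as @ u # bs" by (meson split_list)
      have "adjl E (as @ [u])" using ys(6) unfolding ab by (simp add: adjl_append)
      moreover have "hd (as @ [u]) = x" using ys(2) ab by (cases as) auto
      moreover have "distinct (as @ [u])" using ys(5) ab by auto
      moreover have "length (as @ [u]) \<le> Suc (Suc r)" using ys(4) ab by auto
      ultimately show ?thesis by (intro exI[of _ "as @ [u]"]) auto
    next
      case False
      have "adjl E (ys @ [u])" using ys w(2) by (simp add: adjl_append)
      moreover have "hd (ys @ [u]) = x" using ys by simp
      moreover have "distinct (ys @ [u])" using ys(5) False by auto
      moreover have "length (ys @ [u]) \<le> Suc (Suc r)" using ys(4) by auto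
      ultimately show ?thesis by (intro exI[of _ "ys @ [u]"]) auto
    qed
  qed
qed

lemma walk_insert_edge:
  assumes "walk_le (insert {a, b} S) r x u"
  shows "walk_le S r x u \<or> walk_le S r a u \<or> walk_le S r b u"
  using assms
proof (induction r arbitrary: u)
  case 0 then show ?case by simp
next
  case (Suc r)
  from Suc.prems have "walk_le (insert {a, b} S) r x u \<or> (\<exists>w. walk_le (insert {a, b} S) r x w \<and> {w, u} \<in> insert {a, b} S)"
    by (simp only: walk_le.simps)
  then show ?case
  proof (elim disjE)
    assume "walk_le (insert {a, b} S) r x u"
    then show ?thesis using Suc.IH by auto
  next
    assume "\<exists>w. walk_le (insert {a, b} S) r x w \<and> {w, u} \<in> insert {a, b} S"
    then obtain w where w: "walk_le (insert {a, b} S) r x w" "{w, u} \<in> insert {a, b} S" by blast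
    show ?thesis
    proof (cases "{w, u} \<in> S")
      case True
      then show ?thesis using Suc.IH[OF w(1)] by auto
    next
      case False
      then have "u = a \<or> u = b" using w(2) by (auto simp: doubleton_eq_iff)
      moreover have "walk_le S (Suc r) u u" using walk_le_mono[of S 0 u u "Suc r"] by simp
      ultimately show ?thesis by auto
    qed
  qed
qed

definition nbr :: "nat \<Rightarrow> nat set set \<Rightarrow> nat \<Rightarrow> nat set" where
  "nbr n E u = {w \<in> {..<n}. {u, w} \<in> E}"

definition deg :: "nat \<Rightarrow> nat set set \<Rightarrow> nat \<Rightarrow> nat" where
  "deg n E u = card (nbr n E u)"

lemma deg_le_n: "deg n E u \<le> n"
proof -
  have "card (nbr n E u) \<le> card {..<n}" by (rule card_mono) (auto simp: nbr_def)
  then show ?thesis by (simp add: deg_def)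
qed

lemma deg_insert:
  assumes "a \<noteq> b"
  shows "deg n (insert {a, b} S) u \<le> deg n S u + 1"
proof -
  have "nbr n (insert {a, b} S) u \<subseteq> insert (if u = a then b else a) (nbr n S u)"
    using assms unfolding nbr_def by (auto simp: doubleton_eq_iff)
  then have "deg n (insert {a, b} S) u \<le> card (insert (if u = a then b else a) (nbr n S u))"
    unfolding deg_def by (intro card_mono) (auto simp: nbr_def)
  also have "\<dots> \<le> deg n S u + 1" unfolding deg_def
  proof -
    have "finite (nbr n S u)" unfolding nbr_def by simp
    then show "card (insert (if u = a then b else a) (nbr n S u)) \<le> card (nbr n S u) + 1"
      by (simp add: card_insert_if)
  qed
  finally show ?thesis .
qed


lemma ball_mono_r: "r \<le> r' \<Longrightarrow> ball V E x r \<subseteq> ball V E x r'"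
  unfolding ball_def using walk_le_mono by blast

lemma ball_mono_E: "E \<subseteq> E' \<Longrightarrow> ball V E x r \<subseteq> ball V E' x r"
  unfolding ball_def using walk_le_mono_E by blast

lemma ball_zero: "x \<in> V \<Longrightarrow> ball V E x 0 = {x}"
  unfolding ball_def by auto

lemma ball_Suc_sub:
  assumes "E \<subseteq> all_pairs n"
  shows "ball {..<n} E x (Suc r) \<subseteq> ball {..<n} E x r \<union> (\<Union>w\<in>ball {..<n} E x r. nbr n E w)"
proof -
  have e: "\<And>w u. {w, u} \<in> E \<Longrightarrow> w < n" using assms all_pairs_mem by blast
  show ?thesis unfolding ball_def nbr_def using e by auto
qed

lemma ball_card:
  assumes "x < n" "\<forall>u\<in>ball {..<n} E x R. deg n E u \<le> d" "r \<le> R" and E: "E \<subseteq> all_pairs n"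
  shows "card (ball {..<n} E x r) \<le> (1 + d) ^ r"
  using assms(3)
proof (induction r)
  case 0 then show ?case using assms(1) by (simp add: ball_zero)
next
  case (Suc r)
  let ?B = "ball {..<n} E x r"
  have fin: "finite ?B" unfolding ball_def by simp
  have "card (ball {..<n} E x (Suc r)) \<le> card (?B \<union> (\<Union>w\<in>?B. nbr n E w))"
    by (rule card_mono[OF _ ball_Suc_sub[OF E]]) (use fin in \<open>auto simp: nbr_def\<close>)
  also have "\<dots> \<le> card ?B + card (\<Union>w\<in>?B. nbr n E w)" by (rule card_Un_le)
  also have "card (\<Union>w\<in>?B. nbr n E w) \<le> (\<Sum>w\<in>?B. card (nbr n E w))" by (rule card_UN_le[OF fin])
  also have "\<dots> \<le> (\<Sum>w\<in>?B. d)"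
  proof (rule sum_mono)
    fix w assume "w \<in> ?B"
    then have "w \<in> ball {..<n} E x R" using ball_mono_r[of r R] Suc.prems by auto
    then show "card (nbr n E w) \<le> d" using assms(2) by (simp add: deg_def)
  qed
  also have "\<dots> = card ?B * d" by simp
  finally have "card (ball {..<n} E x (Suc r)) \<le> card ?B * (1 + d)" by (simp add: algebra_simps)
  also have "\<dots> \<le> (1 + d) ^ r * (1 + d)" using Suc by (intro mult_right_mono) auto
  finally show ?case by (simp add: algebra_simps)
qed

definition cyc :: "nat set set \<Rightarrow> nat list \<Rightarrow> bool" where
  "cyc H cs \<longleftrightarrow> adjl H cs \<and> {last cs, hd cs} \<in> H"

lemma has_cycle_iff: "has_cycle V E \<longleftrightarrow> (\<exists>cs. 3 \<le> length cs \<and> distinct cs \<and> set cs \<subseteq> V \<and> cyc E cs)"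
  unfolding has_cycle_def cyc_def adjl_nth by blast

lemma cyc_rotate1: assumes c: "cyc H cs" shows "cyc H (rotate1 cs)"
proof (cases cs)
  case Nil then show ?thesis using c by simp
next
  case (Cons x xs)
  show ?thesis
  proof (cases xs)
    case Nil then show ?thesis using c Cons by simp
  next
    case (Cons y ys)
    have a1: "adjl H (x # xs)" "{last (x # xs), x} \<in> H" using c \<open>cs = x # xs\<close> by (auto simp: cyc_def)
    have "adjl H xs" "{x, hd xs} \<in> H" using a1(1) Cons by auto
    moreover have "last xs = last (x # xs)" using Cons by simp
    ultimately have "adjl H (xs @ [x])"
      using a1(2) adjl_append[of H xs "[x]"] by simp
    moreover have "{last (xs @ [x]), hd (xs @ [x])} \<in> H" using \<open>{x, hd xs} \<in> H\<close> Cons by simp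
    ultimately show ?thesis using \<open>cs = x # xs\<close> by (simp add: cyc_def)
  qed
qed

lemma cyc_rotate: "cyc H cs \<Longrightarrow> cyc H (rotate m cs)"
  by (induction m) (auto simp: cyc_rotate1)

lemma adjl_take: "adjl E xs \<Longrightarrow> adjl E (take k xs)"
  using adjl_append[of E "take k xs" "drop k xs"] by simp

lemma adjl_set:
  assumes "adjl H xs" "H \<subseteq> all_pairs n" "xs \<noteq> []" "hd xs < n"
  shows "set xs \<subseteq> {..<n}"
  using assms
proof (induction H xs rule: adjl.induct)
  case (1 E x y zs)
  then have "{x, y} \<in> all_pairs n" by auto
  then have "y < n" using all_pairs_mem by blast
  then show ?case using 1 by auto
qed auto

lemma rho_exists:
  assumes H: "H \<subseteq> all_pairs n" and a: "a < n"
    and cs: "3 \<le> length cs" "distinct cs" "cyc H cs" "set cs \<subseteq> ball {..<n} H a R"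
  shows "\<exists>ys i. ys \<noteq> [] \<and> distinct ys \<and> hd ys = a \<and> adjl H ys \<and> set ys \<subseteq> {..<n} \<and>
           i + 2 < length ys \<and> {last ys, ys ! i} \<in> H \<and> length ys \<le> R + length cs"
proof -
  let ?P = "\<lambda>r. \<exists>w\<in>set cs. walk_le H r a w"
  have "cs ! 0 \<in> set cs" using cs(1) by (cases cs) auto
  then have "walk_le H R a (cs ! 0)" using cs(4) unfolding ball_def by blast
  then have ex: "?P R" using \<open>cs ! 0 \<in> set cs\<close> by blast
  define r0 where "r0 = (LEAST r. ?P r)"
  have r0R: "r0 \<le> R" unfolding r0_def using ex by (rule Least_le)
  obtain w where w: "w \<in> set cs" "walk_le H r0 a w" using LeastI_ex[of ?P] ex unfolding r0_def by blast
  obtain P where P: "P \<noteq> []" "hd P = a" "last P = w" "length P \<le> Suc r0" "distinct P" "adjl H P"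
    using walk_path[OF w(2)] by blast
  have notin: "P ! j \<notin> set cs" if j: "Suc j < length P" for j
  proof
    assume jin: "P ! j \<in> set cs"
    let ?Q = "take (Suc j) P"
    have "?Q \<noteq> []" using P(1) by simp
    moreover have "hd ?Q = a" using P(1,2) by simp
    moreover have "last ?Q = P ! j" using j P(1) by (simp add: last_conv_nth min_def)
    moreover have "adjl H ?Q" using P(6) by (rule adjl_take)
    moreover have "length ?Q = Suc j" using j by simp
    ultimately have "walk_le H j a (P ! j)" using adjl_walk[of H ?Q] by simp
    then have "?P j" using jin by blast
    then have "r0 \<le> j" unfolding r0_def by (rule Least_le)
    then show False using j P(4) by simp
  qed
  obtain i0 where i0: "i0 < length cs" "cs ! i0 = w" using w(1) by (meson in_set_conv_nth)
  define cs' where "cs' = rotate i0 cs"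
  have cs'_props: "distinct cs'" "set cs' = set cs" "length cs' = length cs" "cyc H cs'" "hd cs' = w"
  proof -
    have "cs \<noteq> []" using cs(1) by (cases cs) auto
    then have "hd (rotate i0 cs) = cs ! i0" using i0(1) by (simp add: hd_rotate_conv_nth)
    then show "distinct cs'" "set cs' = set cs" "length cs' = length cs" "cyc H cs'" "hd cs' = w"
      using cs i0 unfolding cs'_def by (auto simp: cyc_rotate)
  qed
  have cs'ne: "cs' \<noteq> []" using cs(1) cs'_props(3) by auto
  have cs'eq: "cs' = w # tl cs'" using cs'ne cs'_props(5) by (cases cs') auto
  define ys where "ys = P @ tl cs'"
  have tlne: "tl cs' \<noteq> []" using cs(1) cs'_props(3) cs'eq by (metis Suc_le_length_iff list.sel(3) numeral_3_eq_3 not_less_eq_eq le_Suc_eq length_Cons list.size(3) Suc_n_not_le_n)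
  have disj: "set P \<inter> set (tl cs') = {}"
  proof -
    have "x \<notin> set (tl cs')" if x: "x \<in> set P" for x
    proof -
      obtain j where j: "j < length P" "P ! j = x" using x by (meson in_set_conv_nth)
      show ?thesis
      proof (cases "Suc j < length P")
        case True
        then have "x \<notin> set cs" using notin j by blast
        moreover have "set (tl cs') \<subseteq> set cs'" using cs'eq by (metis set_subset_Cons)
        ultimately show ?thesis using cs'_props(2) by blast
      next
        case False
        then have "j = length P - 1" using j by simp
        then have "x = last P" using j P(1) by (simp add: last_conv_nth)
        then have "x = w" using P(3) by simp
        then show ?thesis using cs'_props(1) cs'eq by (metis distinct.simps(2))
      qed
    qed
    then show ?thesis by blast
  qed
  have "distinct ys" unfolding ys_def using P(5) cs'_props(1) disj by (simp add: distinct_tl)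
  moreover have "hd ys = a" unfolding ys_def using P by simp
  moreover have "adjl H ys"
  proof -
    have c1: "adjl H cs'" using cs'_props(4) by (simp add: cyc_def)
    then have "adjl H (tl cs')" "{w, hd (tl cs')} \<in> H" using cs'eq tlne by (metis adjl_Cons)+
    then show ?thesis unfolding ys_def using P(3,6) by (simp add: adjl_append)
  qed
  moreover have "set ys \<subseteq> {..<n}"
    using adjl_set[OF \<open>adjl H ys\<close> H] \<open>hd ys = a\<close> a ys_def P(1) by simp
  moreover have "length P - 1 + 2 < length ys" unfolding ys_def using cs(1) cs'_props(3) P(1) by auto
  moreover have "{last ys, ys ! (length P - 1)} \<in> H"
  proof -
    have "last ys = last cs'" unfolding ys_def using tlne cs'eq by (metis last_appendR last_ConsR)
    moreover have "ys ! (length P - 1) = w" unfolding ys_def using P(1,3)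
      by (simp add: nth_append last_conv_nth)
    ultimately show ?thesis using cs'_props(4,5) by (simp add: cyc_def)
  qed
  moreover have "length ys \<le> R + length cs" unfolding ys_def using P(4) r0R cs'_props(3) cs(1) by auto
  moreover have "ys \<noteq> []" unfolding ys_def using P(1) by simp
  ultimately show ?thesis by blast
qed


lemma edge_lt: "G \<subseteq> all_pairs n \<Longrightarrow> {x, y} \<in> G \<Longrightarrow> x < n \<and> y < n"
  using all_pairs_mem by blast

lemma walk_in_induced:
  assumes G: "G \<subseteq> all_pairs n" and "walk_le G r v u" "r \<le> k" "u < n"
  shows "walk_le (induced G (ball {..<n} G v k)) r v u"
  using assms(2-4)
proof (induction r arbitrary: u)
  case 0 then show ?case by simp
next
  case (Suc r)
  let ?B = "ball {..<n} G v k"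
  from Suc.prems(1) have "walk_le G r v u \<or> (\<exists>w. walk_le G r v w \<and> {w, u} \<in> G)" by simp
  then show ?case
  proof (elim disjE exE conjE)
    assume "walk_le G r v u" then show ?thesis using Suc by simp
  next
    fix w assume w: "walk_le G r v w" "{w, u} \<in> G"
    have wn: "w < n" using edge_lt[OF G w(2)] by simp
    have IH: "walk_le (induced G ?B) r v w" using Suc.IH[OF w(1) _ wn] Suc.prems by simp
    have "w \<in> ?B" using w(1) wn Suc.prems walk_le_mono[of G r v w k] unfolding ball_def by auto
    moreover have "u \<in> ?B" using Suc.prems walk_le_mono[of G "Suc r" v u k] unfolding ball_def by auto
    ultimately have "{w, u} \<in> induced G ?B" using w(2) unfolding induced_def by auto
    then show ?thesis using IH by auto
  qed
qed

lemma ball_connected: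
  assumes G: "G \<subseteq> all_pairs n"
  shows "connected_graph (ball {..<n} G v k) (induced G (ball {..<n} G v k))"
  unfolding connected_graph_def
proof (intro ballI)
  fix u w assume u: "u \<in> ball {..<n} G v k" and w: "w \<in> ball {..<n} G v k"
  have "walk_le (induced G (ball {..<n} G v k)) k v u"
    using walk_in_induced[OF G, of k v u k] u unfolding ball_def by auto
  moreover have "walk_le (induced G (ball {..<n} G v k)) k v w"
    using walk_in_induced[OF G, of k v w k] w unfolding ball_def by auto
  ultimately have "walk_le (induced G (ball {..<n} G v k)) (k + k) u w"
    using walk_le_trans walk_le_sym by blast
  then show "\<exists>m. walk_le (induced G (ball {..<n} G v k)) m u w" by blast
qed

lemma ball_center: "v < n \<Longrightarrow> v \<in> ball {..<n} G v k"
  unfolding ball_def using walk_le_mono[of G 0 v v k] by simp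

lemma not_tree_cycle:
  assumes G: "G \<subseteq> all_pairs n" and v: "v < n"
    and nt: "\<not> is_tree (ball {..<n} G v k) (induced G (ball {..<n} G v k))"
  shows "has_cycle (ball {..<n} G v k) (induced G (ball {..<n} G v k))"
  using nt ball_connected[OF G] ball_center[OF v] unfolding is_tree_def by blast

lemma walk_avoid:
  assumes "walk_le (insert {a, b} S) r v u" "r \<le> k"
    "\<not> walk_le (insert {a, b} S) k v a" "\<not> walk_le (insert {a, b} S) k v b"
  shows "walk_le (S - {{a, b}}) r v u"
  using assms(1,2)
proof (induction r arbitrary: u)
  case 0 then show ?case by simp
next
  case (Suc r)
  from Suc.prems(1) have "walk_le (insert {a, b} S) r v u \<or> (\<exists>w. walk_le (insert {a, b} S) r v w \<and> {w, u} \<in> insert {a, b} S)"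
    by (simp only: walk_le.simps)
  then show ?case
  proof (elim disjE exE conjE)
    assume "walk_le (insert {a, b} S) r v u" then show ?thesis using Suc by simp
  next
    fix w assume w: "walk_le (insert {a, b} S) r v w" "{w, u} \<in> insert {a, b} S"
    have "walk_le (insert {a, b} S) k v w" using w(1) Suc.prems(2) walk_le_mono by simp
    then have "w \<noteq> a" "w \<noteq> b" using assms(3,4) by auto
    then have "{w, u} \<in> S - {{a, b}}" using w(2) by (auto simp: doubleton_eq_iff)
    then show ?thesis using Suc.IH[OF w(1)] Suc.prems(2) by auto
  qed
qed

lemma ball_avoid:
  assumes "\<not> walk_le (insert {a, b} S) k v a" "\<not> walk_le (insert {a, b} S) k v b"
  shows "ball {..<n} (insert {a, b} S) v k = ball {..<n} (S - {{a, b}}) v k"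
    and "induced (insert {a, b} S) (ball {..<n} (insert {a, b} S) v k) = induced (S - {{a, b}}) (ball {..<n} (insert {a, b} S) v k)"
proof -
  show 1: "ball {..<n} (insert {a, b} S) v k = ball {..<n} (S - {{a, b}}) v k"
    unfolding ball_def using walk_avoid[OF _ _ assms] walk_le_mono_E[of "S - {{a, b}}" k v _ "insert {a, b} S"]
    by auto
  have "a \<notin> ball {..<n} (insert {a, b} S) v k" using assms(1) unfolding ball_def by auto
  then show "induced (insert {a, b} S) (ball {..<n} (insert {a, b} S) v k) = induced (S - {{a, b}}) (ball {..<n} (insert {a, b} S) v k)"
    unfolding induced_def by auto
qed

definition dterm :: "nat \<Rightarrow> real \<Rightarrow> (nat set \<Rightarrow> nat set set \<Rightarrow> nat \<Rightarrow> real) \<Rightarrow> nat \<Rightarrow> nat set set \<Rightarrow> nat \<Rightarrow> real" where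
  "dterm k c \<beta> n G v = (let B = ball {..<n} G v k in
      if is_tree B (induced G B) \<and> 1 \<le> card B \<and> real (card B) \<le> t_k c k then 0 else \<beta> B (induced G B) v)"

definition goodv :: "nat \<Rightarrow> real \<Rightarrow> nat \<Rightarrow> nat set set \<Rightarrow> nat \<Rightarrow> bool" where
  "goodv k c n G v = (let B = ball {..<n} G v k in
      is_tree B (induced G B) \<and> 1 \<le> card B \<and> real (card B) \<le> t_k c k)"

lemma X_eq: "Mtilde k \<beta> n G - Mhat k c \<beta> n G = (\<Sum>v<n. dterm k c \<beta> n G v)"
  unfolding Mtilde_def Mhat_def dterm_def sum_subtractf[symmetric] by (rule sum.cong) (auto simp: Let_def)

lemma dterm_good: "goodv k c n G v \<Longrightarrow> dterm k c \<beta> n G v = 0"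
  unfolding goodv_def dterm_def by (simp add: Let_def)

lemma dterm_range: "weight_fun \<beta> \<Longrightarrow> 0 \<le> dterm k c \<beta> n G v \<and> dterm k c \<beta> n G v \<le> 1"
  unfolding weight_fun_def dterm_def by (simp add: Let_def)

lemma dterm_avoid:
  assumes "\<not> walk_le (insert {a, b} S) k v a" "\<not> walk_le (insert {a, b} S) k v b"
  shows "dterm k c \<beta> n (insert {a, b} S) v = dterm k c \<beta> n (S - {{a, b}}) v"
  using ball_avoid[OF assms, of n] unfolding dterm_def by (simp add: Let_def)


definition rho_ev :: "nat \<Rightarrow> nat set set \<Rightarrow> nat \<Rightarrow> nat \<Rightarrow> bool" where
  "rho_ev n H a L = (\<exists>ys i. ys \<noteq> [] \<and> distinct ys \<and> hd ys = a \<and> adjl H ys \<and> set ys \<subseteq> {..<n} \<and>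
      i + 2 < length ys \<and> {last ys, ys ! i} \<in> H \<and> length ys \<le> L)"

definition heavy :: "nat \<Rightarrow> nat set set \<Rightarrow> nat \<Rightarrow> nat \<Rightarrow> nat \<Rightarrow> bool" where
  "heavy n H a R m = (\<exists>u\<in>ball {..<n} H a R. m \<le> deg n H u)"

lemma cyc_mono: "cyc E cs \<Longrightarrow> E \<subseteq> E' \<Longrightarrow> cyc E' cs"
  unfolding cyc_def using adjl_mono by blast

lemma finite_ball: "finite (ball {..<n} G v k)"
  unfolding ball_def by simp

lemma bad_imp_rho:
  assumes H: "H \<subseteq> all_pairs n" and G: "G \<subseteq> H" and a: "a < n" and v: "v < n"
    and av: "walk_le H (k+1) a v"
    and deg: "\<forall>u\<in>ball {..<n} H a (2*k+1). deg n H u \<le> m0"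
    and m0: "real ((1+m0)^k) \<le> t_k c k"
    and bad: "\<not> goodv k c n G v"
  shows "rho_ev n H a (2*k+1 + (1+m0)^(2*k+1))"
proof -
  let ?Ba = "ball {..<n} H a (2*k+1)"
  let ?BH = "ball {..<n} H v k"
  let ?BG = "ball {..<n} G v k"
  have GA: "G \<subseteq> all_pairs n" using G H by blast
  have sub1: "?BH \<subseteq> ?Ba"
  proof
    fix u assume "u \<in> ?BH"
    then have "u < n" "walk_le H k v u" unfolding ball_def by auto
    then have "walk_le H ((k+1) + k) a u" using walk_le_trans[OF av] by blast
    moreover have "(k+1) + k = 2*k+1" by simp
    ultimately show "u \<in> ?Ba" using \<open>u < n\<close> unfolding ball_def by (simp only: mem_Collect_eq lessThan_iff)
  qed
  have cBH: "card ?BH \<le> (1+m0)^k"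
    by (rule ball_card[OF v _ le_refl H]) (use deg sub1 in blast)
  have sub2: "?BG \<subseteq> ?BH" by (rule ball_mono_E[OF G])
  have cBG: "card ?BG \<le> (1+m0)^k" using card_mono[OF finite_ball sub2] cBH by simp
  have "v \<in> ?BG" by (rule ball_center[OF v])
  then have c1: "1 \<le> card ?BG" using finite_ball[of n G v k]
    by (metis One_nat_def Suc_leI card_gt_0_iff empty_iff)
  have c2: "real (card ?BG) \<le> t_k c k" using cBG m0
    by (meson of_nat_le_iff order_trans)
  have "\<not> is_tree ?BG (induced G ?BG)" using bad c1 c2 unfolding goodv_def by (simp add: Let_def)
  then have "has_cycle ?BG (induced G ?BG)" by (rule not_tree_cycle[OF GA v])
  then obtain cs where cs: "3 \<le> length cs" "distinct cs" "set cs \<subseteq> ?BG" "cyc (induced G ?BG) cs"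
    unfolding has_cycle_iff by blast
  have "induced G ?BG \<subseteq> H" using G unfolding induced_def by auto
  then have cyH: "cyc H cs" using cs(4) cyc_mono by blast
  have csBa: "set cs \<subseteq> ?Ba" using cs(3) sub1 sub2 by blast
  obtain ys i where ys: "ys \<noteq> []" "distinct ys" "hd ys = a" "adjl H ys" "set ys \<subseteq> {..<n}"
           "i + 2 < length ys" "{last ys, ys ! i} \<in> H" "length ys \<le> (2*k+1) + length cs"
    using rho_exists[OF H a cs(1,2) cyH csBa] by blast
  have "length cs = card (set cs)" using cs(2) by (simp add: distinct_card)
  also have "\<dots> \<le> card ?Ba" by (rule card_mono[OF finite_ball csBa])
  also have "\<dots> \<le> (1+m0)^(2*k+1)"
    by (rule ball_card[OF a _ le_refl H]) (use deg in blast)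
  finally have "length ys \<le> 2*k+1 + (1+m0)^(2*k+1)" using ys(8) by simp
  then show ?thesis unfolding rho_ev_def using ys by blast
qed

lemma pow_sq: "((x::nat)^(k+1))\<^sup>2 = x^(2*k+2)"
proof -
  have "2*k+2 = (k+1)*2" by simp
  then show ?thesis by (simp only: power_mult)
qed

lemma diff_bound:
  assumes S: "S \<subseteq> all_pairs n" and ab: "a < b" "b < n" and \<beta>: "weight_fun \<beta>"
    and m0: "real ((1+m0)^k) \<le> t_k c k"
  shows "((\<Sum>v<n. dterm k c \<beta> n (insert {a,b} S) v) - (\<Sum>v<n. dterm k c \<beta> n (S - {{a,b}}) v))\<^sup>2
    \<le> real ((1+m0)^(2*k+2)) * of_bool (rho_ev n (insert {a,b} S) a (2*k+1 + (1+m0)^(2*k+1)))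
      + (\<Sum>m\<in>{m0+1..n}. real ((1+m)^(2*k+2)) * of_bool (heavy n (insert {a,b} S) a (2*k+1) m))"
proof -
  define H where "H = insert {a,b} S"
  define G0 where "G0 = S - {{a,b}}"
  have HA: "H \<subseteq> all_pairs n" using S ab unfolding H_def all_pairs_def by auto
  have G0H: "G0 \<subseteq> H" unfolding G0_def H_def by auto
  have an: "a < n" using ab by simp
  define Z where "Z = {v\<in>{..<n}. walk_le H k v a \<or> walk_le H k v b}"
  define bad where "bad v \<longleftrightarrow> \<not> goodv k c n H v \<or> \<not> goodv k c n G0 v" for v
  define D where "D = (\<Sum>v<n. dterm k c \<beta> n H v) - (\<Sum>v<n. dterm k c \<beta> n G0 v)"
  have D_Z: "D = (\<Sum>v\<in>Z. dterm k c \<beta> n H v - dterm k c \<beta> n G0 v)"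
  proof -
    have "D = (\<Sum>v<n. dterm k c \<beta> n H v - dterm k c \<beta> n G0 v)" unfolding D_def by (simp add: sum_subtractf)
    also have "\<dots> = (\<Sum>v\<in>Z. dterm k c \<beta> n H v - dterm k c \<beta> n G0 v)"
      by (rule sum.mono_neutral_right) (auto simp: Z_def H_def G0_def dterm_avoid)
    finally show ?thesis .
  qed
  have absD: "\<bar>D\<bar> \<le> real (card Z) * of_bool (\<exists>v\<in>Z. bad v)"
  proof -
    have "\<bar>D\<bar> \<le> (\<Sum>v\<in>Z. \<bar>dterm k c \<beta> n H v - dterm k c \<beta> n G0 v\<bar>)" unfolding D_Z by (rule sum_abs)
    also have "\<dots> \<le> (\<Sum>v\<in>Z. of_bool (\<exists>v\<in>Z. bad v))"
    proof (rule sum_mono)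
      fix v assume vZ: "v \<in> Z"
      show "\<bar>dterm k c \<beta> n H v - dterm k c \<beta> n G0 v\<bar> \<le> of_bool (\<exists>v\<in>Z. bad v)"
      proof (cases "bad v")
        case True
        have "\<bar>dterm k c \<beta> n H v - dterm k c \<beta> n G0 v\<bar> \<le> 1"
          using dterm_range[OF \<beta>, of k c n H v] dterm_range[OF \<beta>, of k c n G0 v] by linarith
        then show ?thesis using True vZ by auto
      next
        case False
        then show ?thesis unfolding bad_def by (simp add: dterm_good)
      qed
    qed
    also have "\<dots> = real (card Z) * of_bool (\<exists>v\<in>Z. bad v)" by simp
    finally show ?thesis .
  qed
  have D2: "D\<^sup>2 \<le> (real (card Z))\<^sup>2 * of_bool (\<exists>v\<in>Z. bad v)"
  proof -
    have "D\<^sup>2 = \<bar>D\<bar>\<^sup>2" by simp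
    also have "\<dots> \<le> (real (card Z) * of_bool (\<exists>v\<in>Z. bad v))\<^sup>2" by (rule power_mono[OF absD]) simp
    also have "\<dots> = (real (card Z))\<^sup>2 * of_bool (\<exists>v\<in>Z. bad v)" by (simp add: power_mult_distrib)
    finally show ?thesis .
  qed
  have D2': "D\<^sup>2 \<le> (real (card Z))\<^sup>2"
    using D2 by (cases "\<exists>v\<in>Z. bad v") auto
  have ZB: "Z \<subseteq> ball {..<n} H a (k+1)"
  proof
    fix v assume "v \<in> Z"
    then have v: "v < n" "walk_le H k v a \<or> walk_le H k v b" unfolding Z_def by auto
    have "walk_le H (k+1) a v"
    proof (cases "walk_le H k v a")
      case True
      then have "walk_le H k a v" by (rule walk_le_sym)
      then show ?thesis using walk_le_mono by (metis le_add1)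
    next
      case False
      then have "walk_le H k b v" using v(2) walk_le_sym by blast
      moreover have "walk_le H 1 a b" unfolding H_def by simp
      ultimately have "walk_le H (1 + k) a v" using walk_le_trans by blast
      then show ?thesis by (simp add: add.commute)
    qed
    then show "v \<in> ball {..<n} H a (k+1)" using v unfolding ball_def by simp
  qed
  let ?Ba = "ball {..<n} H a (2*k+1)"
  let ?Sm = "(\<Sum>m\<in>{m0+1..n}. real ((1+m)^(2*k+2)) * of_bool (heavy n H a (2*k+1) m))"
  have aBa: "a \<in> ?Ba" by (rule ball_center[OF an])
  have sumnn: "0 \<le> ?Sm" by (intro sum_nonneg) simp
  have goal: "D\<^sup>2 \<le> real ((1+m0)^(2*k+2)) * of_bool (rho_ev n H a (2*k+1 + (1+m0)^(2*k+1))) + ?Sm"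
  proof (cases "\<forall>u\<in>?Ba. deg n H u \<le> m0")
    case True
    have cZ: "card Z \<le> (1+m0)^(k+1)"
    proof -
      have "card Z \<le> card (ball {..<n} H a (k+1))" by (rule card_mono[OF finite_ball ZB])
      also have "\<dots> \<le> (1+m0)^(k+1)" by (rule ball_card[OF an True _ HA]) simp
      finally show ?thesis .
    qed
    show ?thesis
    proof (cases "\<exists>v\<in>Z. bad v")
      case True2: True
      then obtain v where vZ: "v\<in>Z" "bad v" by blast
      have vn: "v < n" using vZ unfolding Z_def by simp
      have av: "walk_le H (k+1) a v" using ZB vZ unfolding ball_def by auto
      have rho: "rho_ev n H a (2*k+1 + (1+m0)^(2*k+1))"
        using vZ(2) unfolding bad_def
      proof
        assume "\<not> goodv k c n H v" then show ?thesis by (rule bad_imp_rho[OF HA order_refl an vn av True m0])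
      next
        assume "\<not> goodv k c n G0 v" then show ?thesis by (rule bad_imp_rho[OF HA G0H an vn av True m0])
      qed
      have "(real (card Z))\<^sup>2 \<le> real ((1+m0)^(2*k+2))"
      proof -
        have "(card Z)\<^sup>2 \<le> ((1+m0)^(k+1))\<^sup>2" by (rule power_mono[OF cZ]) simp
        also have "\<dots> = (1+m0)^(2*k+2)" by (rule pow_sq)
        finally show ?thesis by (metis of_nat_le_iff of_nat_power)
      qed
      then show ?thesis using D2' rho sumnn by simp
    next
      case False
      then show ?thesis using D2 sumnn by simp
    qed
  next
    case False
    define \<Delta> where "\<Delta> = Max (deg n H ` ?Ba)"
    have finBa: "finite ?Ba" by (rule finite_ball)
    have deg\<Delta>: "\<forall>u\<in>?Ba. deg n H u \<le> \<Delta>" unfolding \<Delta>_def using finBa by simp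
    have "\<Delta> \<in> deg n H ` ?Ba" unfolding \<Delta>_def using finBa aBa by (intro Max_in) auto
    then obtain u where u: "u \<in> ?Ba" "deg n H u = \<Delta>" by auto
    have \<Delta>m0: "m0 < \<Delta>" using False deg\<Delta> by force
    have \<Delta>n: "\<Delta> \<le> n" using u(2) deg_le_n by metis
    have cZ: "card Z \<le> (1+\<Delta>)^(k+1)"
    proof -
      have "card Z \<le> card (ball {..<n} H a (k+1))" by (rule card_mono[OF finite_ball ZB])
      also have "\<dots> \<le> (1+\<Delta>)^(k+1)" by (rule ball_card[OF an deg\<Delta> _ HA]) simp
      finally show ?thesis .
    qed
    have hv: "heavy n H a (2*k+1) \<Delta>" unfolding heavy_def using u by auto
    have "D\<^sup>2 \<le> (real (card Z))\<^sup>2" by (rule D2')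
    also have "\<dots> \<le> real ((1+\<Delta>)^(2*k+2))"
    proof -
      have "(card Z)\<^sup>2 \<le> ((1+\<Delta>)^(k+1))\<^sup>2" by (rule power_mono[OF cZ]) simp
      also have "\<dots> = (1+\<Delta>)^(2*k+2)" by (rule pow_sq)
      finally show ?thesis by (metis of_nat_le_iff of_nat_power)
    qed
    also have "\<dots> = real ((1+\<Delta>)^(2*k+2)) * of_bool (heavy n H a (2*k+1) \<Delta>)" using hv by simp
    also have "\<dots> \<le> ?Sm"
      by (rule member_le_sum[where f="\<lambda>m. real ((1+m)^(2*k+2)) * of_bool (heavy n H a (2*k+1) m)"])
        (use \<Delta>m0 \<Delta>n in auto)
    also have "\<dots> \<le> real ((1+m0)^(2*k+2)) * of_bool (rho_ev n H a (2*k+1 + (1+m0)^(2*k+1))) + ?Sm"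
      by simp
    finally show ?thesis .
  qed
  then show ?thesis unfolding D_def H_def G0_def .
qed


definition pedges :: "nat list \<Rightarrow> nat set set" where
  "pedges ys = (\<lambda>i. {ys ! i, ys ! Suc i}) ` {i. Suc i < length ys}"

lemma adjl_pedges: "adjl E ys \<longleftrightarrow> pedges ys \<subseteq> E"
  unfolding adjl_nth pedges_def by auto

lemma card_pedges:
  assumes "distinct ys"
  shows "card (pedges ys) = length ys - 1"
proof -
  have "inj_on (\<lambda>i. {ys ! i, ys ! Suc i}) {i. Suc i < length ys}"
  proof (rule inj_onI)
    fix i j assume i: "i \<in> {i. Suc i < length ys}" and j: "j \<in> {i. Suc i < length ys}"
      and eq: "{ys ! i, ys ! Suc i} = {ys ! j, ys ! Suc j}"
    have "ys ! i = ys ! j \<or> ys ! i = ys ! Suc j" using eq by (auto simp: doubleton_eq_iff)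
    then have "i = j \<or> i = Suc j" using i j assms by (auto simp: nth_eq_iff_index_eq)
    moreover have "ys ! j = ys ! i \<or> ys ! j = ys ! Suc i" using eq by (auto simp: doubleton_eq_iff)
    then have "j = i \<or> j = Suc i" using i j assms by (auto simp: nth_eq_iff_index_eq)
    ultimately show "i = j" by auto
  qed
  moreover have "{i. Suc i < length ys} = {..<length ys - 1}" by auto
  ultimately show ?thesis unfolding pedges_def by (simp add: card_image)
qed

lemma pedges_sub_set: "e \<in> pedges ys \<Longrightarrow> e \<subseteq> set ys"
  unfolding pedges_def by auto

lemma pedges_last:
  assumes "distinct ys" "{last ys, w} \<in> pedges ys" "ys \<noteq> []"
  shows "length ys \<ge> 2 \<and> w = ys ! (length ys - 2)"
proof -
  obtain i where i: "Suc i < length ys" "{last ys, w} = {ys ! i, ys ! Suc i}"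
    using assms(2) unfolding pedges_def by auto
  have l: "last ys = ys ! (length ys - 1)" using assms(3) by (simp add: last_conv_nth)
  have "last ys = ys ! i \<or> last ys = ys ! Suc i" using i(2) by (auto simp: doubleton_eq_iff)
  then have "length ys - 1 = i \<or> length ys - 1 = Suc i" using l i(1) assms(1) by (auto simp: nth_eq_iff_index_eq)
  then have si: "Suc i = length ys - 1" using i(1) by auto
  then have "w = ys ! i" using i(2) l by (auto simp: doubleton_eq_iff)
  moreover have "i = length ys - 2" "length ys \<ge> 2" using si i(1) by arith+
  ultimately show ?thesis by simp
qed

definition DL :: "nat \<Rightarrow> nat \<Rightarrow> nat \<Rightarrow> nat list set" where
  "DL n x j = {ys. distinct ys \<and> ys \<noteq> [] \<and> hd ys = x \<and> set ys \<subseteq> {..<n} \<and> length ys = Suc j}"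

lemma DL_sub: "DL n x j \<subseteq> (\<lambda>zs. x # zs) ` {zs. set zs \<subseteq> {..<n} \<and> length zs = j}"
proof
  fix ys assume "ys \<in> DL n x j"
  then have "ys = x # tl ys" "set (tl ys) \<subseteq> {..<n}" "length (tl ys) = j"
    unfolding DL_def by (auto simp: list.set_sel(2) subset_iff)
  then show "ys \<in> (\<lambda>zs. x # zs) ` {zs. set zs \<subseteq> {..<n} \<and> length zs = j}" by blast
qed

lemma finite_DL: "finite (DL n x j)"
  by (rule finite_subset[OF DL_sub]) (simp add: finite_lists_length_eq)

lemma card_DL: "card (DL n x j) \<le> n ^ j"
proof -
  have "card (DL n x j) \<le> card ((\<lambda>zs. x # zs) ` {zs. set zs \<subseteq> {..<n} \<and> length zs = j})"
    by (rule card_mono[OF _ DL_sub]) (simp add: finite_lists_length_eq)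
  also have "\<dots> \<le> card {zs. set zs \<subseteq> {..<n} \<and> length zs = j}" by (rule card_image_le) (simp add: finite_lists_length_eq)
  also have "\<dots> = n ^ j" by (simp add: card_lists_length_eq)
  finally show ?thesis .
qed

lemma pow_diff_le: "(n::nat) ^ t \<le> (n - 1) ^ t + t * n ^ (t - 1)"
proof (induction t)
  case 0 then show ?case by simp
next
  case (Suc t)
  show ?case
  proof (cases "n = 0")
    case True then show ?thesis by simp
  next
    case False
    have "n ^ Suc t = n * n ^ t" by simp
    also have "\<dots> \<le> n * ((n - 1) ^ t + t * n ^ (t - 1))" using Suc by simp
    also have "\<dots> = (n - 1) * (n - 1) ^ t + (n - 1) ^ t + t * (n * n ^ (t - 1))"
      using False by (simp add: algebra_simps)
    also have "\<dots> \<le> (n - 1) ^ Suc t + n ^ t + t * n ^ t"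
    proof -
      have "(n - 1) ^ t \<le> n ^ t" by (rule power_mono) auto
      moreover have "t * (n * n ^ (t - 1)) \<le> t * n ^ t" by (cases t) auto
      ultimately show ?thesis by (simp add: add_mono)
    qed
    also have "\<dots> = (n - 1) ^ Suc t + Suc t * n ^ (Suc t - 1)" by simp
    finally show ?thesis .
  qed
qed

lemma card_DL_b:
  assumes "b < n" "a \<noteq> b"
  shows "card {ys \<in> DL n a t. b \<in> set ys} \<le> t * n ^ (t - 1)"
proof -
  let ?L = "\<lambda>A. {zs. set zs \<subseteq> A \<and> length zs = t}"
  have sub: "{ys \<in> DL n a t. b \<in> set ys} \<subseteq> (\<lambda>zs. a # zs) ` (?L {..<n} - ?L ({..<n} - {b}))"
  proof
    fix ys assume "ys \<in> {ys \<in> DL n a t. b \<in> set ys}"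
    then have ys: "ys \<in> DL n a t" "b \<in> set ys" by auto
    then obtain zs where zs: "ys = a # zs" "zs \<in> ?L {..<n}" using DL_sub by blast
    then have "b \<in> set zs" using ys(2) assms(2) by auto
    then have "zs \<notin> ?L ({..<n} - {b})" by auto
    then show "ys \<in> (\<lambda>zs. a # zs) ` (?L {..<n} - ?L ({..<n} - {b}))" using zs by blast
  qed
  have fin: "finite (?L {..<n})" by (simp add: finite_lists_length_eq)
  have "card {ys \<in> DL n a t. b \<in> set ys} \<le> card ((\<lambda>zs. a # zs) ` (?L {..<n} - ?L ({..<n} - {b})))"
    by (rule card_mono[OF _ sub]) (use fin in auto)
  also have "\<dots> \<le> card (?L {..<n} - ?L ({..<n} - {b}))" by (rule card_image_le) (use fin in auto)
  also have "\<dots> = card (?L {..<n}) - card (?L ({..<n} - {b}))"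
    by (rule card_Diff_subset) (auto simp: finite_lists_length_eq)
  also have "\<dots> = n ^ t - (n - 1) ^ t" using assms(1) by (simp add: card_lists_length_eq)
  also have "\<dots> \<le> t * n ^ (t - 1)" using pow_diff_le[of n t] by simp
  finally show ?thesis .
qed

lemma fact_choose_le: "fact r * (n choose r) \<le> (n::nat) ^ r"
proof (cases "r \<le> n")
  case True
  have e: "fact n = (fact r * (n choose r)) * fact (n - r)"
    using binomial_fact_lemma[OF True] by (simp add: ac_simps)
  have "fact n div fact (n - r) = fact r * (n choose r)" unfolding e by simp
  moreover have "fact n div fact (n - r) \<le> n ^ r" by (rule fact_div_fact_le_pow[OF True])
  ultimately show ?thesis by simp
next
  case False
  then have "n < r" by simp
  then have z: "n choose r = 0" by (rule binomial_eq_0)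
  show ?thesis unfolding z by simp
qed

lemma pow_fact_le_exp: "0 < (x::real) \<Longrightarrow> x ^ r / fact r \<le> exp x"
proof -
  assume x: "0 < x"
  have "pmf (poisson_pmf x) r \<le> 1" by (rule pmf_le_1)
  then have h: "x ^ r / fact r * exp (- x) \<le> 1" using x by simp
  have "x ^ r / fact r = (x ^ r / fact r * exp (- x)) * exp x"
    by (simp add: exp_minus_inverse mult.assoc[symmetric] mult.commute[of "exp (-x)"])
  also have "\<dots> \<le> 1 * exp x" by (rule mult_right_mono[OF h]) simp
  finally show ?thesis by simp
qed


definition QS :: "nat \<Rightarrow> nat list \<Rightarrow> nat \<Rightarrow> nat set set" where
  "QS n ys r = {Q. Q \<subseteq> {..<n} - {last ys, ys ! (length ys - 2)} \<and> card Q = r}"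

definition Fh :: "nat list \<Rightarrow> nat set \<Rightarrow> nat set set" where
  "Fh ys Q = pedges ys \<union> (\<lambda>w. {last ys, w}) ` Q"

lemma finite_QS: "finite (QS n ys r)"
proof (rule finite_subset)
  show "QS n ys r \<subseteq> Pow {..<n}" unfolding QS_def by blast
qed simp

lemma card_QS: "card (QS n ys r) \<le> n choose r"
proof -
  let ?X = "{..<n} - {last ys, ys ! (length ys - 2)}"
  have eq: "QS n ys r = {Q. Q \<subseteq> ?X \<and> card Q = r}" unfolding QS_def by (rule refl)
  have finX: "finite ?X" by (intro finite_Diff finite_lessThan)
  have "card (QS n ys r) = card ?X choose r" unfolding eq by (rule n_subsets[OF finX])
  also have "\<dots> \<le> n choose r"
  proof -
    have "card ?X \<le> card {..<n}" by (rule card_mono[OF finite_lessThan Diff_subset])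
    then have cX: "card ?X \<le> n" by simp
    show "card ?X choose r \<le> n choose r" using cX by (rule binomial_right_mono)
  qed
  finally show ?thesis .
qed

lemma finite_pedges: "finite (pedges ys)"
  unfolding pedges_def by (rule finite_imageI) (rule finite_subset[of _ "{..<length ys}"], auto)

lemma card_Fh:
  assumes "ys \<in> DL n x j" "Q \<in> QS n ys r"
  shows "j + r \<le> card (Fh ys Q)"
proof -
  have d: "distinct ys" "ys \<noteq> []" "length ys = Suc j" using assms(1) unfolding DL_def by auto
  have Q: "Q \<subseteq> {..<n} - {last ys, ys ! (length ys - 2)}" "card Q = r" using assms(2) unfolding QS_def by auto
  have finQ: "finite Q" by (rule finite_subset[OF Q(1)]) simp
  have inj: "inj_on (\<lambda>w. {last ys, w}) Q"
    by (rule inj_onI) (auto simp: doubleton_eq_iff)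
  have disj: "pedges ys \<inter> (\<lambda>w. {last ys, w}) ` Q = {}"
  proof (rule ccontr)
    assume "pedges ys \<inter> (\<lambda>w. {last ys, w}) ` Q \<noteq> {}"
    then obtain w where w: "w \<in> Q" "{last ys, w} \<in> pedges ys" by auto
    then have "w = ys ! (length ys - 2)" using pedges_last[OF d(1) w(2) d(2)] by simp
    then show False using w(1) Q(1) by auto
  qed
  have "card (Fh ys Q) = card (pedges ys) + card ((\<lambda>w. {last ys, w}) ` Q)"
    unfolding Fh_def by (rule card_Un_disjoint[OF finite_pedges _ disj]) (use finQ in simp)
  also have "\<dots> = j + r" using card_pedges[OF d(1)] d(3) card_image[OF inj] Q(2) by simp
  finally show ?thesis by simp
qed

lemma heavy_extract:
  assumes S: "S \<subseteq> all_pairs n" and x: "x < n"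
    and u: "u \<in> ball {..<n} S x R" "r + 1 \<le> deg n S u"
  shows "\<exists>j\<le>R. \<exists>ys\<in>DL n x j. \<exists>Q\<in>QS n ys r. Fh ys Q \<subseteq> S"
proof -
  have wu: "walk_le S R x u" "u < n" using u(1) unfolding ball_def by auto
  obtain P where P: "P \<noteq> []" "hd P = x" "last P = u" "length P \<le> Suc R" "distinct P" "adjl S P"
    using walk_path[OF wu(1)] by blast
  have setP: "set P \<subseteq> {..<n}" using adjl_set[OF P(6) S P(1)] P(2) x by simp
  define j where "j = length P - 1"
  have PDL: "P \<in> DL n x j" unfolding DL_def j_def using P setP by auto
  have jR: "j \<le> R" unfolding j_def using P(4) by simp
  let ?pr = "P ! (length P - 2)"
  let ?N = "nbr n S u - {last P, ?pr}"
  have uN: "u \<notin> nbr n S u"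
  proof
    assume "u \<in> nbr n S u"
    then have "{u, u} \<in> all_pairs n" using S unfolding nbr_def by auto
    then show False using all_pairs_mem by blast
  qed
  have eqN: "?N = nbr n S u - {?pr}" using uN P(3) by auto
  have finN: "finite (nbr n S u)" unfolding nbr_def by simp
  have "card (nbr n S u) - 1 \<le> card (nbr n S u - {?pr})"
    by (simp add: card_Diff_singleton_if)
  then have "r \<le> card ?N" using u(2) eqN unfolding deg_def by simp
  then obtain Q where Q: "Q \<subseteq> ?N" "card Q = r" by (meson obtain_subset_with_card_n)
  have QQS: "Q \<in> QS n P r" unfolding QS_def using Q unfolding nbr_def by auto
  have "Fh P Q \<subseteq> S"
  proof -
    have "pedges P \<subseteq> S" using P(6) adjl_pedges by blast
    moreover have "(\<lambda>w. {last P, w}) ` Q \<subseteq> S" using Q(1) P(3) unfolding nbr_def by auto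
    ultimately show ?thesis unfolding Fh_def by auto
  qed
  then show ?thesis using jR PDL QQS by blast
qed

lemma heavyS_bound:
  assumes p: "0 \<le> p" "p \<le> 1" and x: "x < n"
  shows "EA (all_pairs n) p (\<lambda>S. of_bool (\<exists>u\<in>ball {..<n} S x R. r + 1 \<le> deg n S u))
     \<le> (\<Sum>j\<le>R. real (n ^ j) * real (n choose r) * p ^ (j + r))"
proof -
  let ?A = "all_pairs n"
  define ev where "ev j S \<longleftrightarrow> (\<exists>ys\<in>DL n x j. \<exists>Q\<in>QS n ys r. Fh ys Q \<subseteq> S)" for j S
  have "EA ?A p (\<lambda>S. of_bool (\<exists>u\<in>ball {..<n} S x R. r + 1 \<le> deg n S u))
      \<le> EA ?A p (\<lambda>S. \<Sum>j\<le>R. of_bool (ev j S))"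
  proof (rule EA_mono[OF p])
    fix S assume S: "S \<subseteq> ?A"
    show "of_bool (\<exists>u\<in>ball {..<n} S x R. r + 1 \<le> deg n S u) \<le> (\<Sum>j\<le>R. of_bool (ev j S) :: real)"
    proof (cases "\<exists>u\<in>ball {..<n} S x R. r + 1 \<le> deg n S u")
      case True
      then obtain u where "u\<in>ball {..<n} S x R" "r + 1 \<le> deg n S u" by blast
      then obtain j where j: "j \<le> R" "ev j S" using heavy_extract[OF S x] unfolding ev_def by blast
      have "(1::real) = of_bool (ev j S)" using j by simp
      also have "\<dots> \<le> (\<Sum>j\<le>R. of_bool (ev j S))" by (rule member_le_sum) (use j in auto)
      finally show ?thesis using True by simp
    qed (simp add: sum_nonneg)
  qed
  also have "\<dots> = (\<Sum>j\<le>R. EA ?A p (\<lambda>S. of_bool (ev j S)))" by (rule EA_sum) simp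
  also have "\<dots> \<le> (\<Sum>j\<le>R. real (n ^ j) * real (n choose r) * p ^ (j + r))"
  proof (rule sum_mono)
    fix j assume "j \<in> {..R}"
    let ?I = "Sigma (DL n x j) (\<lambda>ys. QS n ys r)"
    have finI: "finite ?I" by (intro finite_SigmaI finite_DL finite_QS)
    have "EA ?A p (\<lambda>S. of_bool (ev j S)) \<le> (\<Sum>i\<in>?I. p ^ card ((\<lambda>(ys, Q). Fh ys Q) i))"
      by (rule union_bound[OF finite_all_pairs p finI]) (auto simp: ev_def)
    also have "\<dots> \<le> (\<Sum>i\<in>?I. p ^ (j + r))"
    proof (rule sum_mono)
      fix i assume "i \<in> ?I"
      then obtain ys Q where i: "i = (ys, Q)" "ys \<in> DL n x j" "Q \<in> QS n ys r" by auto
      show "p ^ card ((\<lambda>(ys, Q). Fh ys Q) i) \<le> p ^ (j + r)"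
        unfolding i using card_Fh[OF i(2,3)] p by (simp add: power_decreasing)
    qed
    also have "\<dots> = real (card ?I) * p ^ (j + r)" by simp
    also have "\<dots> \<le> real (n ^ j) * real (n choose r) * p ^ (j + r)"
    proof -
      have "card ?I = (\<Sum>ys\<in>DL n x j. card (QS n ys r))" by (rule card_SigmaI) (auto intro: finite_DL finite_QS)
      also have "\<dots> \<le> (\<Sum>ys\<in>DL n x j. n choose r)" by (rule sum_mono) (rule card_QS)
      also have "\<dots> = card (DL n x j) * (n choose r)" by simp
      also have "\<dots> \<le> n ^ j * (n choose r)" by (rule mult_right_mono[OF card_DL]) simp
      finally have "real (card ?I) \<le> real (n ^ j) * real (n choose r)" by (metis of_nat_le_iff of_nat_mult)
      then show ?thesis by (rule mult_right_mono) (use p in simp)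
    qed
    finally show "EA ?A p (\<lambda>S. of_bool (ev j S)) \<le> real (n ^ j) * real (n choose r) * p ^ (j + r)" .
  qed
  finally show ?thesis .
qed


definition Fr :: "nat list \<Rightarrow> nat \<Rightarrow> nat set set" where
  "Fr ys i = insert {last ys, ys ! i} (pedges ys)"

lemma rho_extract:
  assumes S: "S \<subseteq> all_pairs n" and r: "rho_ev n (insert {a,b} S) a L"
  shows "\<exists>t<L. \<exists>ys\<in>DL n a t. \<exists>i\<in>{..<t-1}. Fr ys i - {{a,b}} \<subseteq> S"
proof -
  obtain ys i where ys: "ys \<noteq> []" "distinct ys" "hd ys = a" "adjl (insert {a,b} S) ys" "set ys \<subseteq> {..<n}"
      "i + 2 < length ys" "{last ys, ys ! i} \<in> insert {a,b} S" "length ys \<le> L"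
    using r unfolding rho_ev_def by blast
  define t where "t = length ys - 1"
  have len: "length ys = Suc t" unfolding t_def using ys(1) by (cases ys) simp_all
  have DLm: "ys \<in> DL n a t" unfolding DL_def using ys(1,2,3,5) len by blast
  have tL: "t < L" using ys(8) len by simp
  have iI: "i \<in> {..<t-1}" using ys(6) len by simp
  have pe: "pedges ys \<subseteq> insert {a,b} S" using ys(4) by (simp only: adjl_pedges)
  have "Fr ys i \<subseteq> insert {a,b} S" unfolding Fr_def using pe ys(7) by (simp only: insert_subset)
  then have FS: "Fr ys i - {{a,b}} \<subseteq> S" by blast
  show ?thesis using tL DLm iI FS by blast
qed

lemma card_Fr:
  assumes "ys \<in> DL n a t" "i < t - 1"
  shows "card (Fr ys i) = t + 1"
proof -
  have d: "distinct ys" "ys \<noteq> []" "length ys = Suc t" using assms(1) unfolding DL_def by auto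
  have "{last ys, ys ! i} \<notin> pedges ys"
  proof
    assume "{last ys, ys ! i} \<in> pedges ys"
    then have "ys ! i = ys ! (length ys - 2)" using pedges_last[OF d(1) _ d(2)] by blast
    then have "i = length ys - 2" using d assms(2) by (simp add: nth_eq_iff_index_eq)
    then show False using d(3) assms(2) by simp
  qed
  then show ?thesis unfolding Fr_def using card_pedges[OF d(1)] d(3) finite_pedges by simp
qed

lemma Fr_sub: "e \<in> Fr ys i \<Longrightarrow> i < length ys \<Longrightarrow> ys \<noteq> [] \<Longrightarrow> e \<subseteq> set ys"
  unfolding Fr_def using pedges_sub_set by auto

lemma pcard_Fr:
  fixes p :: real
  assumes p: "0 \<le> p" "p \<le> 1" and ys: "ys \<in> DL n a t" and i: "i < t - 1"
  shows "p ^ card (Fr ys i - {{a,b}}) \<le> (if b \<in> set ys then p ^ t else p ^ (t+1))"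
proof -
  have c: "card (Fr ys i) = t + 1" by (rule card_Fr[OF ys i])
  have fin: "finite (Fr ys i)" unfolding Fr_def using finite_pedges by simp
  have ne: "ys \<noteq> []" "length ys = Suc t" using ys unfolding DL_def by auto
  show ?thesis
  proof (cases "b \<in> set ys")
    case True
    have "t \<le> card (Fr ys i - {{a,b}})" using c fin card_Diff_singleton_if[of "Fr ys i" "{a,b}"] by auto
    then have "p ^ card (Fr ys i - {{a,b}}) \<le> p ^ t" using power_decreasing[of t "card (Fr ys i - {{a,b}})" p] p by simp
    then show ?thesis using True by simp
  next
    case False
    have "{a,b} \<notin> Fr ys i"
    proof
      assume "{a,b} \<in> Fr ys i"
      then have "{a,b} \<subseteq> set ys" using Fr_sub ne i by fastforce
      then show False using False by auto
    qed
    then show ?thesis using False c by simp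
  qed
qed

lemma rho_bound:
  assumes p: "0 \<le> p" "p \<le> 1" and ab: "a < b" "b < n"
  shows "EA (all_pairs n) p (\<lambda>S. of_bool (rho_ev n (insert {a,b} S) a L))
    \<le> (\<Sum>t<L. real t * (real (n ^ t) * p ^ (t+1) + real (t * n ^ (t-1)) * p ^ t))"
proof -
  let ?A = "all_pairs n"
  define ev where "ev t S \<longleftrightarrow> (\<exists>ys\<in>DL n a t. \<exists>i\<in>{..<t-1}. Fr ys i - {{a,b}} \<subseteq> S)" for t S
  have "EA ?A p (\<lambda>S. of_bool (rho_ev n (insert {a,b} S) a L)) \<le> EA ?A p (\<lambda>S. \<Sum>t<L. of_bool (ev t S))"
  proof (rule EA_mono[OF p])
    fix S assume S: "S \<subseteq> ?A"
    show "of_bool (rho_ev n (insert {a,b} S) a L) \<le> (\<Sum>t<L. of_bool (ev t S) :: real)"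
    proof (cases "rho_ev n (insert {a,b} S) a L")
      case True
      then obtain t where t: "t < L" "ev t S" using rho_extract[OF S] unfolding ev_def by blast
      have "(1::real) = of_bool (ev t S)" using t by simp
      also have "\<dots> \<le> (\<Sum>t<L. of_bool (ev t S))" by (rule member_le_sum) (use t in auto)
      finally show ?thesis using True by simp
    qed (simp add: sum_nonneg)
  qed
  also have "\<dots> = (\<Sum>t<L. EA ?A p (\<lambda>S. of_bool (ev t S)))" by (rule EA_sum) simp
  also have "\<dots> \<le> (\<Sum>t<L. real t * (real (n ^ t) * p ^ (t+1) + real (t * n ^ (t-1)) * p ^ t))"
  proof (rule sum_mono)
    fix t assume "t \<in> {..<L}"
    let ?I = "Sigma (DL n a t) (\<lambda>_. {..<t-1})"
    let ?g = "\<lambda>ys. if b \<in> set ys then p ^ t else p ^ (t+1)"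
    have finI: "finite ?I" by (intro finite_SigmaI finite_DL) simp
    have "EA ?A p (\<lambda>S. of_bool (ev t S)) \<le> (\<Sum>i\<in>?I. p ^ card ((\<lambda>(ys, i). Fr ys i - {{a,b}}) i))"
      by (rule union_bound[OF finite_all_pairs p finI]) (auto simp: ev_def)
    also have "\<dots> \<le> (\<Sum>i\<in>?I. ?g (fst i))"
    proof (rule sum_mono)
      fix x assume "x \<in> ?I"
      then obtain ys i where x: "x = (ys, i)" "ys \<in> DL n a t" "i < t - 1" by auto
      show "p ^ card ((\<lambda>(ys, i). Fr ys i - {{a,b}}) x) \<le> ?g (fst x)"
        unfolding x using pcard_Fr[OF p x(2,3)] by simp
    qed
    also have "\<dots> = (\<Sum>ys\<in>DL n a t. \<Sum>i<t-1. ?g ys)"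
      by (subst sum.Sigma) (auto intro: finite_DL simp: case_prod_beta)
    also have "\<dots> = (\<Sum>ys\<in>DL n a t. real (t - 1) * ?g ys)" by simp
    also have "\<dots> \<le> (\<Sum>ys\<in>DL n a t. real t * (p ^ (t+1) + (if b \<in> set ys then p ^ t else 0)))"
    proof (rule sum_mono)
      fix ys assume "ys \<in> DL n a t"
      have g1: "?g ys \<le> p ^ (t+1) + (if b \<in> set ys then p ^ t else 0)" using p by auto
      have g2: "0 \<le> ?g ys" using p by simp
      have g3: "real (t - 1) \<le> real t" by simp
      have g4: "0 \<le> p ^ (t+1) + (if b \<in> set ys then p ^ t else 0)" using p by simp
      show "real (t - 1) * ?g ys \<le> real t * (p ^ (t+1) + (if b \<in> set ys then p ^ t else 0))"
        by (rule mult_mono[OF g3 g1 _ g2]) simp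
    qed
    also have "\<dots> = real t * (real (card (DL n a t)) * p ^ (t+1) + real (card {ys \<in> DL n a t. b \<in> set ys}) * p ^ t)"
    proof -
      have "(\<Sum>ys\<in>DL n a t. (if b \<in> set ys then p ^ t else 0)) = (\<Sum>ys\<in>{ys \<in> DL n a t. b \<in> set ys}. p ^ t)"
        by (rule sum.inter_filter[symmetric]) (rule finite_DL)
      then have h: "(\<Sum>ys\<in>DL n a t. (if b \<in> set ys then p ^ t else 0)) = real (card {ys \<in> DL n a t. b \<in> set ys}) * p ^ t"
        by simp
      have "(\<Sum>ys\<in>DL n a t. real t * (p ^ (t+1) + (if b \<in> set ys then p ^ t else 0)))
          = real t * (\<Sum>ys\<in>DL n a t. (p ^ (t+1) + (if b \<in> set ys then p ^ t else 0)))"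
        by (rule sum_distrib_left[symmetric])
      also have "\<dots> = real t * ((\<Sum>ys\<in>DL n a t. p ^ (t+1)) + (\<Sum>ys\<in>DL n a t. (if b \<in> set ys then p ^ t else 0)))"
        by (simp only: sum.distrib)
      finally show ?thesis unfolding h by simp
    qed
    also have "\<dots> \<le> real t * (real (n ^ t) * p ^ (t+1) + real (t * n ^ (t-1)) * p ^ t)"
    proof -
      have "real (card (DL n a t)) \<le> real (n ^ t)" using card_DL by (simp only: of_nat_le_iff)
      moreover have "real (card {ys \<in> DL n a t. b \<in> set ys}) \<le> real (t * n ^ (t-1))"
        using card_DL_b[OF ab(2)] ab(1) by (simp only: of_nat_le_iff)
      ultimately have X: "real (card (DL n a t)) * p ^ (t+1) \<le> real (n ^ t) * p ^ (t+1)"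
          and Y: "real (card {ys \<in> DL n a t. b \<in> set ys}) * p ^ t \<le> real (t * n ^ (t-1)) * p ^ t"
        using p by (simp_all add: mult_right_mono)
      show ?thesis by (rule mult_left_mono[OF add_mono[OF X Y]]) simp
    qed
    finally show "EA ?A p (\<lambda>S. of_bool (ev t S)) \<le> real t * (real (n ^ t) * p ^ (t+1) + real (t * n ^ (t-1)) * p ^ t)" .
  qed
  finally show ?thesis .
qed


lemma ln_bound:
  fixes k :: nat and m :: real
  assumes k: "k \<ge> 100" and m: "m \<ge> 100 * (real k)\<^sup>2 - 1"
  shows "(2 * real k + 2) * ln (1 + m) \<le> m / 2"
proof -
  define s where "s = sqrt (1 + m)"
  have kk: "real k \<ge> 100" using k by simp
  have m1: "1 + m \<ge> (10 * real k)\<^sup>2" using m by (simp add: power2_eq_square)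
  have pos: "0 < 1 + m" using m1 kk by (smt (verit) zero_less_power2)
  have s2: "s\<^sup>2 = 1 + m" unfolding s_def using pos by simp
  have "sqrt ((10 * real k)\<^sup>2) \<le> s" unfolding s_def by (rule real_sqrt_le_mono[OF m1])
  moreover have "sqrt ((10 * real k)\<^sup>2) = 10 * real k" using kk by (simp only: real_sqrt_abs)
  ultimately have s10: "s \<ge> 10 * real k" by simp
  have spos: "0 < s" using s10 kk by simp
  have "ln (1 + m) = ln (s ^ 2)" using s2 by simp
  also have "\<dots> = 2 * ln s" using spos by (simp add: ln_realpow)
  also have "\<dots> \<le> 2 * (s - 1)" using ln_le_minus_one[OF spos] by simp
  finally have l: "ln (1 + m) \<le> 2 * (s - 1)" .
  have "(2 * real k + 2) * ln (1 + m) \<le> (2 * real k + 2) * (2 * (s - 1))"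
    by (rule mult_left_mono[OF l]) simp
  also have "\<dots> = (4 * real k + 4) * (s - 1)" by (simp add: algebra_simps)
  also have "\<dots> \<le> ((s + 1) / 2) * (s - 1)"
    by (rule mult_right_mono) (use s10 kk in auto)
  also have "\<dots> = m / 2" using s2 by (simp add: power2_eq_square algebra_simps)
  finally show ?thesis .
qed

lemma exp3_le: "exp (3::real) \<le> 27"
proof -
  have "exp (3::real) = exp 1 * exp 1 * exp 1" by (simp add: exp_add[symmetric])
  also have "\<dots> \<le> 3 * 3 * 3" using exp_le by (intro mult_mono) auto
  finally show ?thesis by simp
qed

lemma fact_bound:
  assumes c: "0 < (c::real)"
  shows "c ^ j / fact j \<le> exp (27 * c - 3 * real j)"
proof -
  have "(exp 3 * c) ^ j / fact j \<le> exp (exp 3 * c)" by (rule pow_fact_le_exp) (use c in simp)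
  also have "\<dots> \<le> exp (27 * c)" using exp3_le c by simp
  finally have h: "(exp 3 * c) ^ j / fact j \<le> exp (27 * c)" .
  have e3: "exp 3 ^ j = exp (3 * real j)" by (simp add: exp_of_nat_mult[symmetric] mult.commute)
  have "c ^ j / fact j = (exp 3 * c) ^ j / fact j / exp 3 ^ j" by (simp add: power_mult_distrib)
  also have "\<dots> \<le> exp (27 * c) / exp 3 ^ j" by (rule divide_right_mono[OF h]) simp
  also have "\<dots> = exp (27 * c - 3 * real j)" unfolding e3 by (simp add: exp_diff)
  finally show ?thesis .
qed

lemma half_pow: "exp (- real (m::nat)) \<le> (1/2::real) ^ m"
proof -
  have "(2::real) ^ m \<le> exp 1 ^ m"
    by (rule power_mono) (use exp_ge_add_one_self[of 1] in auto)
  also have "exp 1 ^ m = exp (real m)" by (simp add: exp_of_nat_mult[symmetric])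
  finally have "2 ^ m \<le> exp (real m)" .
  then have "1 / exp (real m) \<le> 1 / 2 ^ m" by (intro divide_left_mono) auto
  then show ?thesis by (simp add: exp_minus power_one_over inverse_eq_divide)
qed

lemma term_bound:
  fixes k m :: nat and c :: real
  assumes k: "k \<ge> 100" and c: "c > 1" and m: "real m \<ge> 100 * c\<^sup>2 * (real k)\<^sup>2 - 1"
  shows "c * (real ((1+m)^(2*k+2)) * (2 * real (2*k+1+1) * c^(2*k+1) * (c^(m-2) / fact (m-2))))
     \<le> exp (- (c\<^sup>2 * (real k)\<^sup>2)) * (1/2) ^ (m+1)"
proof -
  have kk: "real k \<ge> 100" using k by simp
  define x where "x = c * real k"
  have x100: "x \<ge> 100" unfolding x_def using c kk by (smt (verit) mult_less_cancel_right2)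
  have kx: "real k \<le> x" unfolding x_def using c kk by simp
  have cx: "c \<le> x" unfolding x_def using c kk by (smt (verit) mult_le_cancel_left1)
  have xx: "x * x \<ge> 100 * x" using x100 by (simp add: mult_right_mono)
  have c2k2: "c\<^sup>2 * (real k)\<^sup>2 = x * x" unfolding x_def by (simp add: power2_eq_square)
  have mx: "real m \<ge> 100 * (x * x) - 1" using m c2k2 by simp
  have "real m \<ge> 2" using mx x100 xx by linarith
  then have m2: "m \<ge> 2" by simp
  have mk: "real m \<ge> 100 * (real k)\<^sup>2 - 1"
  proof -
    have "(real k)\<^sup>2 \<le> c\<^sup>2 * (real k)\<^sup>2" using c by (simp add: mult_le_cancel_right1 power_le_one_iff)
    then show ?thesis using m by simp
  qed
  have t1: "real ((1+m)^(2*k+2)) \<le> exp (real m / 2)"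
  proof -
    have "real ((1+m)^(2*k+2)) = (1 + real m) ^ (2*k+2)" by (simp only: of_nat_power of_nat_add of_nat_1)
    also have "\<dots> = exp (ln ((1 + real m) ^ (2*k+2)))" by simp
    also have "\<dots> = exp ((2 * real k + 2) * ln (1 + real m))"
    proof -
      have r: "real (2*k+2) = 2 * real k + 2" by simp
      show ?thesis by (simp only: ln_realpow r)
    qed
    also have "\<dots> \<le> exp (real m / 2)" using ln_bound[OF k mk] by simp
    finally show ?thesis .
  qed
  have t2: "2 * real (2*k+1+1) \<le> exp (4 * real k + 4)"
    using exp_ge_add_one_self[of "4 * real k + 4"] by simp
  have t3: "c ^ (2*k+1) \<le> exp ((2 * real k + 1) * (c - 1))"
  proof -
    have "c ^ (2*k+1) = exp (ln (c ^ (2*k+1)))" using c by simp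
    also have "\<dots> = exp ((2 * real k + 1) * ln c)"
    proof -
      have r: "real (2*k+1) = 2 * real k + 1" by simp
      show ?thesis by (simp only: ln_realpow r)
    qed
    also have "\<dots> \<le> exp ((2 * real k + 1) * (c - 1))"
      using ln_le_minus_one[of c] c by (simp add: mult_left_mono)
    finally show ?thesis .
  qed
  have t4: "c ^ (m-2) / fact (m-2) \<le> exp (27 * c - 3 * (real m - 2))"
    using fact_bound[of c "m-2"] c m2 by (simp add: of_nat_diff)
  have t0: "c \<le> exp (c - 1)" using exp_ge_add_one_self[of "c - 1"] by simp
  have "c * (real ((1+m)^(2*k+2)) * (2 * real (2*k+1+1) * c^(2*k+1) * (c^(m-2) / fact (m-2))))
      \<le> exp (c - 1) * (exp (real m / 2) * (exp (4 * real k + 4) * exp ((2 * real k + 1) * (c - 1)) * exp (27 * c - 3 * (real m - 2))))"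
    using c by (intro mult_mono t0 t1 t2 t3 t4) (auto simp: zero_le_mult_iff)
  also have "\<dots> = exp ((c - 1) + real m / 2 + (4 * real k + 4) + (2 * real k + 1) * (c - 1) + (27 * c - 3 * (real m - 2)))"
    by (simp only: exp_add mult.assoc)
  also have "\<dots> \<le> exp (- (c\<^sup>2 * (real k)\<^sup>2) - real (m+1))"
  proof -
    have e1: "(2 * real k + 1) * (c - 1) = 2 * x + c - 2 * real k - 1" unfolding x_def by (simp add: algebra_simps)
    have r: "real (m+1) = real m + 1" by simp
    have key: "29*c + 2*real k + 2*x + 9 + x*x \<le> 3/2 * real m" using mx kx cx xx x100 by linarith
    have "(c - 1) + real m / 2 + (4 * real k + 4) + (2 * real k + 1) * (c - 1) + (27 * c - 3 * (real m - 2))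
        \<le> - (c\<^sup>2 * (real k)\<^sup>2) - real (m+1)" unfolding e1 c2k2 r using key by (simp add: field_simps)
    then show ?thesis by simp
  qed
  also have "\<dots> = exp (- (c\<^sup>2 * (real k)\<^sup>2)) * exp (- real (m+1))" by (simp add: exp_add[symmetric])
  also have "\<dots> \<le> exp (- (c\<^sup>2 * (real k)\<^sup>2)) * (1/2) ^ (m+1)"
    by (rule mult_left_mono[OF half_pow]) simp
  finally show ?thesis .
qed

lemma half_sum: "(\<Sum>m<N. (1/2::real) ^ (m+1)) \<le> 1"
proof -
  have "(\<Sum>m<N. (1/2::real) ^ (m+1)) = 1 - (1/2) ^ N"
    by (induction N) (auto simp: power_Suc algebra_simps)
  then show ?thesis by simp
qed


lemma card_all_pairs: "card (all_pairs n) \<le> n * n"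
proof -
  have "all_pairs n \<subseteq> (\<lambda>(i, j). {i, j}) ` ({..<n} \<times> {..<n})"
    unfolding all_pairs_def by auto
  then have "card (all_pairs n) \<le> card ((\<lambda>(i, j). {i, j}) ` ({..<n} \<times> {..<n}))"
    by (intro card_mono) auto
  also have "\<dots> \<le> card ({..<n} \<times> {..<n})" by (rule card_image_le) simp
  finally show ?thesis by (simp add: card_cartesian_product)
qed

lemma heavy_split:
  assumes ab: "a < b" and m: "m \<ge> 2"
    and h: "heavy n (insert {a,b} S) a R m"
  shows "(\<exists>u\<in>ball {..<n} S a R. (m-2) + 1 \<le> deg n S u) \<or> (\<exists>u\<in>ball {..<n} S b R. (m-2) + 1 \<le> deg n S u)"
proof -
  obtain u where u: "u \<in> ball {..<n} (insert {a,b} S) a R" "m \<le> deg n (insert {a,b} S) u"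
    using h unfolding heavy_def by blast
  have "deg n (insert {a,b} S) u \<le> deg n S u + 1" using ab by (intro deg_insert) simp
  then have d: "(m-2) + 1 \<le> deg n S u" using u(2) m by simp
  have "u < n" "walk_le (insert {a,b} S) R a u" using u(1) unfolding ball_def by auto
  then have "walk_le S R a u \<or> walk_le S R b u" using walk_insert_edge by blast
  then show ?thesis using d \<open>u < n\<close> unfolding ball_def by auto
qed

lemma heavy_prob:
  fixes c :: real
  assumes c: "c \<ge> 1" and n: "n \<ge> 1" and p: "p = c / real n" "p \<le> 1"
    and ab: "a < b" "b < n" and m: "m \<ge> 2"
  shows "EA (all_pairs n) p (\<lambda>S. of_bool (heavy n (insert {a,b} S) a R m))
     \<le> 2 * real (R+1) * c ^ R * (c ^ (m-2) / fact (m-2))"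
proof -
  let ?A = "all_pairs n"
  let ?r = "m - 2"
  have p0: "0 \<le> p" using p c by simp
  let ?hS = "\<lambda>x S. (\<exists>u\<in>ball {..<n} S x R. ?r + 1 \<le> deg n S u)"
  have one: "EA ?A p (\<lambda>S. of_bool (?hS x S)) \<le> real (R+1) * c ^ R * (c ^ ?r / fact ?r)" if x: "x < n" for x
  proof -
    have "EA ?A p (\<lambda>S. of_bool (?hS x S)) \<le> (\<Sum>j\<le>R. real (n ^ j) * real (n choose ?r) * p ^ (j + ?r))"
      by (rule heavyS_bound[OF p0 p(2) x])
    also have "\<dots> \<le> (\<Sum>j\<le>R. c ^ R * (c ^ ?r / fact ?r))"
    proof (rule sum_mono)
      fix j assume j: "j \<in> {..R}"
      have e1: "real (n ^ j) * p ^ j = c ^ j" using n unfolding p(1) by (simp add: power_divide)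
      have e2: "real (n choose ?r) * p ^ ?r \<le> c ^ ?r / fact ?r"
      proof -
        have "fact ?r * real (n choose ?r) \<le> real n ^ ?r"
          using fact_choose_le[of ?r n] by (metis of_nat_fact of_nat_le_iff of_nat_mult of_nat_power)
        then have "real (n choose ?r) \<le> real n ^ ?r / fact ?r" by (simp add: field_simps)
        then have "real (n choose ?r) * p ^ ?r \<le> real n ^ ?r / fact ?r * p ^ ?r"
          by (rule mult_right_mono) (use p0 in simp)
        also have "\<dots> = c ^ ?r / fact ?r" using n unfolding p(1) by (simp add: power_divide)
        finally show ?thesis .
      qed
      have cj: "c ^ j \<le> c ^ R" using j c by (intro power_increasing) auto
      have "real (n ^ j) * real (n choose ?r) * p ^ (j + ?r) = (real (n ^ j) * p ^ j) * (real (n choose ?r) * p ^ ?r)"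
        by (simp add: power_add algebra_simps)
      also have "\<dots> \<le> c ^ R * (c ^ ?r / fact ?r)"
        unfolding e1 by (rule mult_mono[OF cj e2]) (use c p0 in auto)
      finally show "real (n ^ j) * real (n choose ?r) * p ^ (j + ?r) \<le> c ^ R * (c ^ ?r / fact ?r)" .
    qed
    also have "\<dots> = real (R+1) * c ^ R * (c ^ ?r / fact ?r)" by simp
    finally show ?thesis .
  qed
  have "EA ?A p (\<lambda>S. of_bool (heavy n (insert {a,b} S) a R m)) \<le> EA ?A p (\<lambda>S. of_bool (?hS a S) + of_bool (?hS b S))"
  proof (rule EA_mono[OF p0 p(2)])
    fix S
    show "of_bool (heavy n (insert {a,b} S) a R m) \<le> (of_bool (?hS a S) + of_bool (?hS b S) :: real)"
      using heavy_split[OF ab(1) m, of n S R] by (cases "heavy n (insert {a,b} S) a R m") auto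
  qed
  also have "\<dots> = EA ?A p (\<lambda>S. of_bool (?hS a S)) + EA ?A p (\<lambda>S. of_bool (?hS b S))" by (rule EA_add)
  also have "\<dots> \<le> real (R+1) * c ^ R * (c ^ ?r / fact ?r) + real (R+1) * c ^ R * (c ^ ?r / fact ?r)"
    using ab by (intro add_mono one) auto
  also have "\<dots> = 2 * real (R+1) * c ^ R * (c ^ ?r / fact ?r)" by (simp only: mult_2[symmetric] mult.assoc)
  finally show ?thesis .
qed

lemma rho_prob:
  fixes c :: real
  assumes n: "n \<ge> 1" and p: "p = c / real n" "0 \<le> p" "p \<le> 1" and ab: "a < b" "b < n"
  shows "EA (all_pairs n) p (\<lambda>S. of_bool (rho_ev n (insert {a,b} S) a L))
     \<le> (\<Sum>t<L. real t * (c^(t+1) + real t * c^t)) / real n"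
proof -
  have "EA (all_pairs n) p (\<lambda>S. of_bool (rho_ev n (insert {a,b} S) a L))
      \<le> (\<Sum>t<L. real t * (real (n ^ t) * p ^ (t+1) + real (t * n ^ (t-1)) * p ^ t))"
    by (rule rho_bound[OF p(2,3) ab])
  also have "\<dots> = (\<Sum>t<L. real t * (c^(t+1) + real t * c^t) / real n)"
  proof (rule sum.cong)
    fix t assume "t \<in> {..<L}"
    have nn: "real n > 0" using n by simp
    have a1: "real (n ^ t) * p ^ (t+1) = c^(t+1) / real n"
      using nn unfolding p(1) by (simp add: power_divide field_simps)
    have a2: "real t * (real (t * n ^ (t-1)) * p ^ t) = real t * (real t * c^t / real n)"
    proof (cases t)
      case 0 then show ?thesis by simp
    next
      case (Suc t')
      have h: "real (n ^ t') * p ^ Suc t' = c ^ Suc t' / real n"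
        using nn unfolding p(1) by (simp add: power_divide field_simps)
      have "real (t * n ^ (t-1)) * p ^ t = real t * (real (n ^ t') * p ^ Suc t')" using Suc by (simp add: mult.assoc algebra_simps)
      also have "\<dots> = real t * (c ^ t / real n)" using h Suc by (simp only:)
      finally have e: "real (t * n ^ (t-1)) * p ^ t = real t * (c ^ t / real n)" .
      show ?thesis by (simp only: e times_divide_eq_right)
    qed
    show "real t * (real (n ^ t) * p ^ (t+1) + real (t * n ^ (t-1)) * p ^ t) = real t * (c^(t+1) + real t * c^t) / real n"
      using a1 a2 by (simp add: distrib_left add_divide_distrib)
  qed simp
  also have "\<dots> = (\<Sum>t<L. real t * (c^(t+1) + real t * c^t)) / real n" by (simp add: sum_divide_distrib)
  finally show ?thesis .
qed


theorem lemma5p2: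
  fixes k :: nat and c :: real and \<beta> :: "nat set \<Rightarrow> nat set set \<Rightarrow> nat \<Rightarrow> real"
  assumes "k \<ge> 100" and "c > 1" and "weight_fun \<beta>"
  shows "\<exists>C. \<exists>N. \<forall>n\<ge>N.
           measure_pmf.variance (gnp n (c / real n)) (\<lambda>E. Mtilde k \<beta> n E - Mhat k c \<beta> n E)
             \<le> real n * exp (- (c\<^sup>2 * (real k)\<^sup>2)) + C"
proof -
  have k100: "k \<ge> 100" and c1: "c > 1" and \<beta>: "weight_fun \<beta>" using assms by auto
  define F where "F = \<lfloor>100 * c\<^sup>2 * (real k)\<^sup>2\<rfloor>"
  define m0 where "m0 = nat F - 1"
  define R where "R = 2*k+1"
  define q where "q = 2*k+2"
  define L where "L = 2*k+1 + (1+m0)^(2*k+1)"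
  define K1 where "K1 = (\<Sum>t<L. real t * (c^(t+1) + real t * c^t))"
  define C where "C = c * real ((1+m0)^q) * K1"
  define N where "N = nat \<lceil>c\<rceil> + 1"
  define HB where "HB m = 2 * real (R+1) * c ^ R * (c ^ (m-2) / fact (m-2))" for m
  have kk: "real k \<ge> 100" using k100 by simp
  have ck1: "c\<^sup>2 * (real k)\<^sup>2 \<ge> 1"
  proof -
    have "c\<^sup>2 \<ge> 1" using c1 by (simp add: one_le_power)
    moreover have "(real k)\<^sup>2 \<ge> 1" using kk by (simp add: one_le_power)
    ultimately show "c\<^sup>2 * (real k)\<^sup>2 \<ge> 1" using mult_mono[of 1 "c\<^sup>2" 1 "(real k)\<^sup>2"] by simp
  qed
  then have big: "100 * c\<^sup>2 * (real k)\<^sup>2 \<ge> 1" by simp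
  have F1: "F \<ge> 1" unfolding F_def using big by simp
  have m0F: "real (1 + m0) = real_of_int F" unfolding m0_def using F1 by simp
  have m0up: "real (1 + m0) \<le> 100 * c\<^sup>2 * (real k)\<^sup>2" using m0F unfolding F_def by simp
  have m0lo: "real (m0 + 1) \<ge> 100 * c\<^sup>2 * (real k)\<^sup>2 - 1" using m0F unfolding F_def by simp
  have m0cond: "real ((1+m0)^k) \<le> t_k c k"
  proof -
    have "real ((1+m0)^k) = (real (1+m0))^k" by simp
    also have "\<dots> \<le> (100 * c\<^sup>2 * (real k)\<^sup>2)^k" by (rule power_mono[OF m0up]) simp
    also have "\<dots> = t_k c k"
    proof -
      have e1: "(10 * c * real k)^(2*k) = ((10 * c * real k)^2)^k" by (simp only: power_mult)
      have e2: "(10 * c * real k)^2 = 100 * c\<^sup>2 * (real k)\<^sup>2" by (simp add: power_mult_distrib)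
      show ?thesis unfolding t_k_def e1 e2 ..
    qed
    finally show ?thesis .
  qed
  have K1nn: "0 \<le> K1" unfolding K1_def using c1 by (intro sum_nonneg) simp
  show ?thesis
  proof (intro exI allI impI)
    fix n assume nN: "N \<le> n"
    define p where "p = c / real n"
    have cn: "c < real n" using nN unfolding N_def by linarith
    have n1: "n \<ge> 1" using cn c1 by simp
    have nn: "real n > 0" using n1 by simp
    have p0: "0 \<le> p" unfolding p_def using c1 by simp
    have p1: "p \<le> 1" unfolding p_def using cn nn by simp
    let ?A = "all_pairs n"
    let ?f = "\<lambda>E. Mtilde k \<beta> n E - Mhat k c \<beta> n E"
    define B where "B = real ((1+m0)^q) * (K1 / real n) + (\<Sum>m\<in>{m0+1..n}. real ((1+m)^q) * HB m)"
    have edge: "EA ?A p (\<lambda>S. (?f (insert i S) - ?f (S - {i}))\<^sup>2) \<le> B" if i: "i \<in> ?A" for i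
    proof -
      obtain a b where ab: "i = {a,b}" "a < b" "b < n" using i unfolding all_pairs_def by auto
      have "EA ?A p (\<lambda>S. (?f (insert i S) - ?f (S - {i}))\<^sup>2)
         \<le> EA ?A p (\<lambda>S. real ((1+m0)^q) * of_bool (rho_ev n (insert {a,b} S) a L)
              + (\<Sum>m\<in>{m0+1..n}. real ((1+m)^q) * of_bool (heavy n (insert {a,b} S) a R m)))"
      proof (rule EA_mono[OF p0 p1])
        fix S assume S: "S \<subseteq> ?A"
        show "(?f (insert i S) - ?f (S - {i}))\<^sup>2 \<le> real ((1+m0)^q) * of_bool (rho_ev n (insert {a,b} S) a L)
              + (\<Sum>m\<in>{m0+1..n}. real ((1+m)^q) * of_bool (heavy n (insert {a,b} S) a R m))"
          unfolding X_eq ab(1) q_def L_def R_def by (rule diff_bound[OF S ab(2,3) \<beta> m0cond])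
      qed
      also have "\<dots> = real ((1+m0)^q) * EA ?A p (\<lambda>S. of_bool (rho_ev n (insert {a,b} S) a L))
              + (\<Sum>m\<in>{m0+1..n}. real ((1+m)^q) * EA ?A p (\<lambda>S. of_bool (heavy n (insert {a,b} S) a R m)))"
        by (simp only: EA_add EA_cmult EA_sum[OF finite_atLeastAtMost])
      also have "\<dots> \<le> B" unfolding B_def
      proof (rule add_mono)
        show "real ((1+m0)^q) * EA ?A p (\<lambda>S. of_bool (rho_ev n (insert {a,b} S) a L)) \<le> real ((1+m0)^q) * (K1 / real n)"
          unfolding K1_def by (rule mult_left_mono[OF rho_prob[OF n1 p_def p0 p1 ab(2,3)]]) simp
        show "(\<Sum>m\<in>{m0+1..n}. real ((1+m)^q) * EA ?A p (\<lambda>S. of_bool (heavy n (insert {a,b} S) a R m)))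
            \<le> (\<Sum>m\<in>{m0+1..n}. real ((1+m)^q) * HB m)"
        proof (rule sum_mono)
          fix m assume m: "m \<in> {m0+1..n}"
          have "real (m0 + 1) \<ge> 2" using m0lo big kk c1
          proof -
            have "100 * c\<^sup>2 * (real k)\<^sup>2 \<ge> 100 * 1 * 1" using ck1 by simp
            then show ?thesis using m0lo by simp
          qed
          then have m2: "m \<ge> 2" using m by simp
          show "real ((1+m)^q) * EA ?A p (\<lambda>S. of_bool (heavy n (insert {a,b} S) a R m)) \<le> real ((1+m)^q) * HB m"
            unfolding HB_def
            by (rule mult_left_mono[OF heavy_prob[OF _ n1 p_def p1 ab(2,3) m2]]) (use c1 in simp_all)
        qed
      qed
      finally show ?thesis .
    qed
    have EAnn: "0 \<le> EA ?A p (\<lambda>S. (?f (insert i S) - ?f (S - {i}))\<^sup>2)" for i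
      by (rule EA_nonneg[OF p0 p1]) simp
    have HBnn: "0 \<le> HB m" for m unfolding HB_def using c1 by simp
    have Bnn: "0 \<le> B" unfolding B_def
      by (intro add_nonneg_nonneg mult_nonneg_nonneg sum_nonneg divide_nonneg_nonneg K1nn HBnn) simp_all
    have "measure_pmf.variance (gnp n (c / real n)) ?f
        \<le> p * (1-p) * (\<Sum>i\<in>?A. EA ?A p (\<lambda>S. (?f (insert i S) - ?f (S - {i}))\<^sup>2))"
      unfolding p_def[symmetric] by (rule var_gnp[OF p0 p1])
    also have "\<dots> \<le> p * (\<Sum>i\<in>?A. EA ?A p (\<lambda>S. (?f (insert i S) - ?f (S - {i}))\<^sup>2))"
    proof -
      have "0 \<le> (\<Sum>i\<in>?A. EA ?A p (\<lambda>S. (?f (insert i S) - ?f (S - {i}))\<^sup>2))" by (intro sum_nonneg EAnn)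
      moreover have "p * (1-p) \<le> p" using p0 p1 by (simp add: algebra_simps)
      ultimately show ?thesis by (rule mult_right_mono[rotated])
    qed
    also have "\<dots> \<le> p * (\<Sum>i\<in>?A. B)" by (intro mult_left_mono sum_mono edge p0)
    also have "\<dots> = p * real (card ?A) * B" by simp
    also have "\<dots> \<le> p * (real n * real n) * B"
    proof -
      have "real (card ?A) \<le> real n * real n" using card_all_pairs[of n] by (metis of_nat_le_iff of_nat_mult)
      then show ?thesis using p0 Bnn by (intro mult_right_mono mult_left_mono) auto
    qed
    also have "\<dots> = c * real n * B" unfolding p_def using nn by (simp add: field_simps)
    also have "\<dots> = C + real n * (c * (\<Sum>m\<in>{m0+1..n}. real ((1+m)^q) * HB m))"
      unfolding B_def C_def using nn by (simp add: field_simps)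
    also have "\<dots> \<le> C + real n * exp (- (c\<^sup>2 * (real k)\<^sup>2))"
    proof -
      have "c * (\<Sum>m\<in>{m0+1..n}. real ((1+m)^q) * HB m) = (\<Sum>m\<in>{m0+1..n}. c * (real ((1+m)^q) * HB m))"
        by (simp add: sum_distrib_left)
      also have "\<dots> \<le> (\<Sum>m\<in>{m0+1..n}. exp (- (c\<^sup>2 * (real k)\<^sup>2)) * (1/2) ^ (m+1))"
      proof (rule sum_mono)
        fix m assume m: "m \<in> {m0+1..n}"
        then have "real (m0+1) \<le> real m" by simp
        then have "real m \<ge> 100 * c\<^sup>2 * (real k)\<^sup>2 - 1" using m0lo by linarith
        then show "c * (real ((1+m)^q) * HB m) \<le> exp (- (c\<^sup>2 * (real k)\<^sup>2)) * (1/2) ^ (m+1)"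
          unfolding HB_def q_def R_def by (rule term_bound[OF k100 c1])
      qed
      also have "\<dots> \<le> (\<Sum>m<n+1. exp (- (c\<^sup>2 * (real k)\<^sup>2)) * (1/2) ^ (m+1))"
        by (rule sum_mono2) auto
      also have "\<dots> = exp (- (c\<^sup>2 * (real k)\<^sup>2)) * (\<Sum>m<n+1. (1/2::real) ^ (m+1))"
        by (rule sum_distrib_left[symmetric])
      also have "\<dots> \<le> exp (- (c\<^sup>2 * (real k)\<^sup>2)) * 1"
        by (rule mult_left_mono[OF half_sum]) simp
      finally have "c * (\<Sum>m\<in>{m0+1..n}. real ((1+m)^q) * HB m) \<le> exp (- (c\<^sup>2 * (real k)\<^sup>2))" by simp
      then show ?thesis using nn by (simp add: mult_left_mono)
    qed
    finally show "measure_pmf.variance (gnp n (c / real n)) ?f \<le> real n * exp (- (c\<^sup>2 * (real k)\<^sup>2)) + C"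
      by simp
  qed
qed


end
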